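(* Let $k\geq 1$ and $n\geq k+2$ be integers. For any $k$-tree $T_n$ with $n$ vertices, the Smith normal form of its $k$-distance matrix is $$\operatorname{SNF}({\sf D}^{k}(T_n))={\sf I}_{(k-1)(n-k)+2}\oplus (k+1){\sf I}_{n-k-2}\oplus [k(k+1)(n-k)].$$
   Context: A $k$-tree is either the complete graph on $k$ vertices, or a graph obtained from a smaller $k$-tree by adding a new vertex joined by $k$ edges to all vertices of a $k$-clique (complete subgraph on $k$ vertices). In a $k$-tree $T$, two distinct $k$-cliques are adjacent if both are contained in a common $(k+1)$-clique. For $k$-cliques $\tau,\tau'$, a $k$-walk from $\tau$ to $\tau'$ is a sequence $\tau_1\sigma_1\tau_2\sigma_2\cdots\tau_l$ with $\tau_1=\tau$, $\tau_l=\tau'$, the $\tau_i$ being $k$-cliques and $\sigma_i$ a $(k+1)$-clique containing both $\tau_i$ and $\tau_{i+1}$; the $k$-distance $\operatorname{dist}^k(\tau,\tau')$ is the number of $(k+1)$-cliques in a shortest such walk. If $T$ has $c$ $k$-cliques $\tau_1,\dots,\tau_c$ (in any fixed order), the $k$-distance matrix ${\sf D}^k(T)$ is the $c\times c$ integer matrix with $(i,j)$-entry $0$ if $i=j$ and $\operatorname{dist}^k(\tau_i,\tau_j)$ otherwise. The Smith normal form $\operatorname{SNF}({\sf M})$ of an integer matrix ${\sf M}$ is the unique diagonal matrix $\operatorname{diag}(f_1,\dots,f_r,0,\dots,0)$ with $f_i>0$, $f_i\mid f_{i+1}$, $r=\operatorname{rank}{\sf M}$, such that ${\sf M}={\sf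 P}\operatorname{SNF}({\sf M}){\sf Q}$ for some matrices ${\sf P},{\sf Q}$ invertible over $\mathbb{Z}$. ${\sf I}_m$ is the $m\times m$ identity matrix, $\oplus$ denotes block-diagonal sum, and $[x]$ is the $1\times 1$ matrix with entry $x$. *)

theory Defs
  imports "Jordan_Normal_Form.Matrix"
begin

text \<open>Simple graphs: a vertex set V and a set E of undirected edges (2-element sets).\<close>

definition is_clique :: "'a set set \<Rightarrow> 'a set \<Rightarrow> bool" where
  "is_clique E C \<longleftrightarrow> (\<forall>u\<in>C. \<forall>v\<in>C. u \<noteq> v \<longrightarrow> {u, v} \<in> E)"

definition complete_edges :: "'a set \<Rightarrow> 'a set set" where
  "complete_edges V = {{u, v} | u v. u \<in> V \<and> v \<in> V \<and> u \<noteq> v}"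

inductive ktree :: "nat \<Rightarrow> 'a set \<Rightarrow> 'a set set \<Rightarrow> bool" for k where
  base: "finite V \<Longrightarrow> card V = k \<Longrightarrow> ktree k V (complete_edges V)"
| step: "ktree k V E \<Longrightarrow> x \<notin> V \<Longrightarrow> C \<subseteq> V \<Longrightarrow> card C = k \<Longrightarrow> is_clique E C \<Longrightarrow>
         ktree k (insert x V) (E \<union> {{x, c} | c. c \<in> C})"

definition cliques :: "nat \<Rightarrow> 'a set \<Rightarrow> 'a set set \<Rightarrow> 'a set set" where
  "cliques m V E = {C. C \<subseteq> V \<and> finite C \<and> card C = m \<and> is_clique E C}"

definition kstep :: "nat \<Rightarrow> 'a set \<Rightarrow> 'a set set \<Rightarrow> 'a set \<Rightarrow> 'a set \<Rightarrow> bool" where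
  "kstep k V E \<tau> \<tau>' \<longleftrightarrow> \<tau> \<in> cliques k V E \<and> \<tau>' \<in> cliques k V E \<and>
     (\<exists>\<sigma>\<in>cliques (k+1) V E. \<tau> \<subseteq> \<sigma> \<and> \<tau>' \<subseteq> \<sigma>)"

text \<open>k-distance: number of (k+1)-cliques in a shortest k-walk.\<close>
definition kdist :: "nat \<Rightarrow> 'a set \<Rightarrow> 'a set set \<Rightarrow> 'a set \<Rightarrow> 'a set \<Rightarrow> nat" where
  "kdist k V E \<tau> \<tau>' = (LEAST m. (kstep k V E ^^ m) \<tau> \<tau>')"

definition kdist_mat :: "nat \<Rightarrow> 'a set \<Rightarrow> 'a set set \<Rightarrow> 'a set list \<Rightarrow> int mat" where
  "kdist_mat k V E cs = mat (length cs) (length cs)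
     (\<lambda>(i, j). if i = j then 0 else int (kdist k V E (cs ! i) (cs ! j)))"

definition smith_form :: "int mat \<Rightarrow> bool" where
  "smith_form S \<longleftrightarrow> (\<forall>i<dim_row S. \<forall>j<dim_col S. i \<noteq> j \<longrightarrow> S $$ (i, j) = 0) \<and>
     (\<exists>r \<le> min (dim_row S) (dim_col S).
        (\<forall>i<r. S $$ (i, i) > 0) \<and>
        (\<forall>i. i + 1 < r \<longrightarrow> S $$ (i, i) dvd S $$ (i + 1, i + 1)) \<and>
        (\<forall>i. r \<le> i \<and> i < min (dim_row S) (dim_col S) \<longrightarrow> S $$ (i, i) = 0))"

text \<open>S is the Smith normal form of M: S is in Smith form and M = P S Q with P, Q invertible
  over the integers. (By uniqueness of the SNF this characterises SNF(M).)\<close>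
definition is_SNF_of :: "int mat \<Rightarrow> int mat \<Rightarrow> bool" where
  "is_SNF_of M S \<longleftrightarrow> smith_form S \<and>
     (\<exists>P Q. P \<in> carrier_mat (dim_row M) (dim_row M) \<and> Q \<in> carrier_mat (dim_col M) (dim_col M) \<and>
        invertible_mat P \<and> invertible_mat Q \<and>
        S \<in> carrier_mat (dim_row M) (dim_col M) \<and> M = P * S * Q)"

definition diag3 :: "nat \<Rightarrow> nat \<Rightarrow> int \<Rightarrow> int \<Rightarrow> int mat" where
  "diag3 a b c d = mat (a + b + 1) (a + b + 1)
     (\<lambda>(i, j). if i \<noteq> j then 0 else if i < a then 1 else if i < a + b then c else d)"

end

theory Submission
  imports Defs
begin


definition unimod :: "nat \<Rightarrow> int mat \<Rightarrow> bool" where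
  "unimod n P \<longleftrightarrow> P \<in> carrier_mat n n \<and> (\<exists>P'. P' \<in> carrier_mat n n \<and> P * P' = 1\<^sub>m n \<and> P' * P = 1\<^sub>m n)"

lemma unimod_invertible: "unimod n P \<Longrightarrow> invertible_mat P"
  unfolding unimod_def invertible_mat_def inverts_mat_def square_mat.simps by auto

lemma unimod_mult:
  assumes "unimod n P" "unimod n Q" shows "unimod n (P * Q)"
proof -
  obtain P' where P: "P \<in> carrier_mat n n" "P' \<in> carrier_mat n n" "P * P' = 1\<^sub>m n" "P' * P = 1\<^sub>m n"
    using assms(1) unfolding unimod_def by auto
  obtain Q' where Q: "Q \<in> carrier_mat n n" "Q' \<in> carrier_mat n n" "Q * Q' = 1\<^sub>m n" "Q' * Q = 1\<^sub>m n"
    using assms(2) unfolding unimod_def by auto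
  have a: "Q * (Q' * P') = P'"
    using P Q assoc_mult_mat[of Q n n Q' n P' n, symmetric] by simp
  have 1: "P * Q * (Q' * P') = 1\<^sub>m n"
    using P Q a assoc_mult_mat[of P n n Q n "Q' * P'" n] by simp
  have b: "P' * (P * Q) = Q"
    using P Q assoc_mult_mat[of P' n n P n Q n, symmetric] by simp
  have 2: "Q' * P' * (P * Q) = 1\<^sub>m n"
    using P Q b assoc_mult_mat[of Q' n n P' n "P * Q" n] by simp
  show ?thesis unfolding unimod_def using 1 2 P Q by (intro conjI exI[of _ "Q' * P'"]) auto
qed

lemma unimod_one: "unimod n (1\<^sub>m n)"
  unfolding unimod_def by (intro conjI exI[of _ "1\<^sub>m n"]) auto

definition equivm :: "int mat \<Rightarrow> int mat \<Rightarrow> bool" where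
  "equivm M S \<longleftrightarrow> (\<exists>P Q. unimod (dim_row M) P \<and> unimod (dim_col M) Q \<and>
      S \<in> carrier_mat (dim_row M) (dim_col M) \<and> M = P * S * Q)"

lemma equivm_refl: "equivm M M"
  unfolding equivm_def
  by (intro exI[of _ "1\<^sub>m (dim_row M)"] exI[of _ "1\<^sub>m (dim_col M)"]) (auto simp: unimod_one)

lemma equivm_trans:
  assumes "equivm M S1" "equivm S1 S" shows "equivm M S"
proof -
  obtain P1 Q1 where 1: "unimod (dim_row M) P1" "unimod (dim_col M) Q1"
    "S1 \<in> carrier_mat (dim_row M) (dim_col M)" "M = P1 * S1 * Q1"
    using assms(1) unfolding equivm_def by auto
  obtain P2 Q2 where 2: "unimod (dim_row S1) P2" "unimod (dim_col S1) Q2"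
    "S \<in> carrier_mat (dim_row S1) (dim_col S1)" "S1 = P2 * S * Q2"
    using assms(2) unfolding equivm_def by auto
  define m where "m = dim_row M"
  define n where "n = dim_col M"
  have d: "dim_row S1 = m" "dim_col S1 = n" using 1(3) unfolding m_def n_def by auto
  have c: "P1 \<in> carrier_mat m m" "Q1 \<in> carrier_mat n n" "P2 \<in> carrier_mat m m" "Q2 \<in> carrier_mat n n"
    "S \<in> carrier_mat m n"
    using 1 2 d unfolding unimod_def m_def n_def by auto
  have e1: "P1 * ((P2 * S) * Q2) = (P1 * (P2 * S)) * Q2"
    by (rule assoc_mult_mat[symmetric]) (use c in auto)
  have e2: "P1 * (P2 * S) = (P1 * P2) * S"
    by (rule assoc_mult_mat[symmetric]) (use c in auto)
  have e3: "((P1 * P2) * S) * Q2 * Q1 = ((P1 * P2) * S) * (Q2 * Q1)"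
    by (rule assoc_mult_mat) (use c in auto)
  have "M = (P1 * P2) * S * (Q2 * Q1)"
    unfolding 1(4) 2(4) e1 e2 e3 ..
  moreover have "unimod m (P1 * P2)" using unimod_mult[of m P1 P2] 1(1) 2(1) d unfolding m_def by simp
  moreover have "unimod n (Q2 * Q1)" using unimod_mult[of n Q2 Q1] 1(2) 2(2) d unfolding n_def by simp
  ultimately show ?thesis unfolding equivm_def m_def[symmetric] n_def[symmetric] using c(5) by blast
qed



lemma mult_entry:
  assumes "A \<in> carrier_mat n m" "B \<in> carrier_mat m p" "i < n" "j < p"
  shows "(A * B) $$ (i, j) = (\<Sum>l<m. A $$ (i, l) * B $$ (l, j))"
  using assms by (simp add: scalar_prod_def atLeast0LessThan)

lemma sum_delta_nat:
  fixes n :: nat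
  assumes "i < n" shows "(\<Sum>l<n. (if i = l then 1 else 0) * (g l :: int)) = g i"
proof -
  have "(\<Sum>l<n. (if i = l then 1 else 0) * g l) = (\<Sum>l<n. if i = l then g l else 0)"
    by (rule sum.cong) auto
  also have "\<dots> = g i" using assms by (subst sum.delta') auto
  finally show ?thesis .
qed

lemma sum_delta_nat':
  fixes n :: nat
  assumes "j < n" shows "(\<Sum>l<n. (g l :: int) * (if l = j then 1 else 0)) = g j"
proof -
  have "(\<Sum>l<n. g l * (if l = j then 1 else 0)) = (\<Sum>l<n. if l = j then g l else 0)"
    by (rule sum.cong) auto
  also have "\<dots> = g j" using assms by (subst sum.delta) auto
  finally show ?thesis .
qed

lemma mult_mat_entry:
  "i < n \<Longrightarrow> j < p \<Longrightarrow> (mat n m f * mat m p g) $$ (i,j) = (\<Sum>l<m. f (i,l) * g (l,j))"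
  by (simp add: scalar_prod_def atLeast0LessThan)

lemma mult_mat_entry2:
  "A \<in> carrier_mat m p \<Longrightarrow> i < n \<Longrightarrow> j < p \<Longrightarrow> (mat n m f * A) $$ (i,j) = (\<Sum>l<m. f (i,l) * A $$ (l,j))"
  by (simp add: scalar_prod_def atLeast0LessThan)

lemma mult_mat_entry3:
  "A \<in> carrier_mat n m \<Longrightarrow> i < n \<Longrightarrow> j < p \<Longrightarrow> (A * mat m p f) $$ (i,j) = (\<Sum>l<m. A $$ (i,l) * f (l,j))"
  by (simp add: scalar_prod_def atLeast0LessThan)

lemma sum_delta_nat2:
  fixes n :: nat
  assumes "i < n" shows "(\<Sum>l<n. (g l :: int) * (if i = l then 1 else 0)) = g i"
  using sum_delta_nat[OF assms, of g] by (simp add: mult.commute)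

lemma sum_delta_nat2':
  fixes n :: nat
  assumes "j < n" shows "(\<Sum>l<n. (if l = j then 1 else 0) * (g l :: int)) = g j"
  using sum_delta_nat'[OF assms, of g] by (simp add: mult.commute)

lemma nil_prod:
  fixes n :: nat
  assumes c: "\<forall>i j. c i j \<noteq> 0 \<longrightarrow> i \<in> R \<and> j \<notin> R" and "i < n" "j < n"
  shows "(\<Sum>l<n. ((if i = l then 1 else 0) + s * c i l) * ((if l = j then 1 else 0) + t * c l j))
        = (if i = j then 1 else 0) + (s + t) * (c i j :: int)"
proof -
  have z: "c i l * c l j = 0" "c l j * c i l = 0" for l using c by (metis mult_eq_0_iff)+
  have "(\<Sum>l<n. ((if i = l then 1 else 0) + s * c i l) * ((if l = j then 1 else 0) + t * c l j))
    = (\<Sum>l<n. (if i = l then 1 else 0) * ((if l = j then 1 else 0) + t * c l j))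
      + (\<Sum>l<n. s * c i l * (if l = j then 1 else 0))"
    by (simp add: algebra_simps sum.distrib z)
  also have "\<dots> = ((if i = j then 1 else 0) + t * c i j) + s * c i j"
    using assms(2,3) by (simp add: sum_delta_nat sum_delta_nat')
  finally show ?thesis by (simp add: algebra_simps)
qed

lemma unimod_nil:
  assumes c: "\<forall>i j. c i j \<noteq> 0 \<longrightarrow> i \<in> R \<and> j \<notin> R"
  shows "unimod n (mat n n (\<lambda>(i,j). (if i = j then 1 else 0) + s * c i j))" (is "unimod n ?P")
proof -
  let ?Q = "mat n n (\<lambda>(i,j). (if i = j then 1 else 0) + (- s) * c i j)"
  have "?P * ?Q = 1\<^sub>m n"
    by (rule eq_matI) (simp_all only: mult_mat_entry index_one_mat dim_row_mat dim_col_mat index_mat split nil_prod[OF c], simp_all)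
  moreover have "?Q * ?P = 1\<^sub>m n"
    by (rule eq_matI) (simp_all only: mult_mat_entry index_one_mat dim_row_mat dim_col_mat index_mat split nil_prod[OF c], simp_all)
  ultimately show ?thesis unfolding unimod_def by (intro conjI exI[of _ ?Q]) auto
qed

lemma rowop_nat:
  assumes c: "\<forall>i j. c i j \<noteq> 0 \<longrightarrow> i \<in> R \<and> j \<notin> R" and A: "A \<in> carrier_mat n m"
  shows "equivm A (mat n m (\<lambda>(i,j). A $$ (i,j) + (\<Sum>l<n. c i l * A $$ (l,j))))" (is "equivm A ?A'")
proof -
  let ?P = "mat n n (\<lambda>(i,j). (if i = j then 1 else 0) + 1 * c i j)"
  let ?Q = "mat n n (\<lambda>(i,j). (if i = j then 1 else 0) + (- 1) * c i j)"
  have PA: "?A' = ?P * A"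
  proof (rule eq_matI)
    fix i j assume ij: "i < dim_row (?P * A)" "j < dim_col (?P * A)"
    then have ij': "i < n" "j < m" using A by auto
    have "(?P * A) $$ (i,j) = (\<Sum>l<n. ((if i = l then 1 else 0) + c i l) * A $$ (l, j))"
      using A ij' by (simp only: mult_mat_entry2 split mult_1)
    also have "\<dots> = A $$ (i,j) + (\<Sum>l<n. c i l * A $$ (l,j))"
      using ij' by (simp add: algebra_simps sum.distrib sum_delta_nat sum_delta_nat2)
    finally show "?A' $$ (i,j) = (?P * A) $$ (i,j)" using ij' by simp
  qed (use A in auto)
  have QP: "?Q * ?P = 1\<^sub>m n"
    by (rule eq_matI) (simp_all only: mult_mat_entry index_one_mat dim_row_mat dim_col_mat index_mat split nil_prod[OF c], simp_all)
  have "A = ?Q * ?A' * 1\<^sub>m m"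
  proof -
    have "?Q * ?A' = ?Q * (?P * A)" using PA by simp
    also have "\<dots> = (?Q * ?P) * A" by (rule assoc_mult_mat[symmetric]) (use A in auto)
    also have "\<dots> = A" using QP A by simp
    finally show ?thesis using A by simp
  qed
  then show ?thesis unfolding equivm_def using A unimod_nil[OF c, of n "-1"] unimod_one[of m]
    by (intro exI[of _ ?Q] exI[of _ "1\<^sub>m m"]) auto
qed

lemma colop_nat:
  assumes c: "\<forall>i j. c i j \<noteq> 0 \<longrightarrow> j \<in> R \<and> i \<notin> R" and A: "A \<in> carrier_mat n m"
  shows "equivm A (mat n m (\<lambda>(i,j). A $$ (i,j) + (\<Sum>l<m. A $$ (i,l) * c l j)))" (is "equivm A ?A'")
proof -
  define c' where "c' i j = c j i" for i j
  have c': "\<forall>i j. c' j i \<noteq> 0 \<longrightarrow> j \<in> R \<and> i \<notin> R" using c unfolding c'_def by auto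
  have c'': "\<forall>i j. c i j \<noteq> 0 \<longrightarrow> i \<in> -R \<and> j \<notin> -R" using c by auto
  let ?P = "mat m m (\<lambda>(i,j). (if i = j then 1 else 0) + 1 * c i j)"
  let ?Q = "mat m m (\<lambda>(i,j). (if i = j then 1 else 0) + (- 1) * c i j)"
  have PA: "?A' = A * ?P"
  proof (rule eq_matI)
    fix i j assume ij: "i < dim_row (A * ?P)" "j < dim_col (A * ?P)"
    then have ij': "i < n" "j < m" using A by auto
    have "(A * ?P) $$ (i,j) = (\<Sum>l<m. A $$ (i, l) * ((if l = j then 1 else 0) + c l j))"
      using A ij' by (simp only: mult_mat_entry3 split mult_1)
    also have "\<dots> = A $$ (i,j) + (\<Sum>l<m. A $$ (i,l) * c l j)"
      using ij' by (simp add: algebra_simps sum.distrib sum_delta_nat' sum_delta_nat2')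
    finally show "?A' $$ (i,j) = (A * ?P) $$ (i,j)" using ij' by simp
  qed (use A in auto)
  have QP: "?P * ?Q = 1\<^sub>m m"
    by (rule eq_matI) (simp_all only: mult_mat_entry index_one_mat dim_row_mat dim_col_mat index_mat split nil_prod[OF c''], simp_all)
  have "A = 1\<^sub>m n * ?A' * ?Q"
  proof -
    have "?A' * ?Q = (A * ?P) * ?Q" using PA by simp
    also have "\<dots> = A * (?P * ?Q)" by (rule assoc_mult_mat) (use A in auto)
    also have "\<dots> = A" using QP A by simp
    finally show ?thesis using A by simp
  qed
  then show ?thesis unfolding equivm_def using A unimod_nil[OF c'', of m "-1"] unimod_one[of n]
    by (intro exI[of _ "1\<^sub>m n"] exI[of _ ?Q]) auto
qed



definition matL :: "'b list \<Rightarrow> ('b \<Rightarrow> 'b \<Rightarrow> int) \<Rightarrow> int mat" where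
  "matL cs f = mat (length cs) (length cs) (\<lambda>(i,j). f (cs ! i) (cs ! j))"

lemma matL_cong: "(\<And>x y. x \<in> set cs \<Longrightarrow> y \<in> set cs \<Longrightarrow> f x y = g x y) \<Longrightarrow> matL cs f = matL cs g"
  unfolding matL_def by (rule eq_matI) auto

lemma matL_carrier: "matL cs f \<in> carrier_mat (length cs) (length cs)"
  unfolding matL_def by auto

lemma sum_cs: "distinct cs \<Longrightarrow> (\<Sum>l<length cs. h (cs ! l)) = (\<Sum>z\<in>set cs. h z)"
  by (simp add: sum.distinct_set_conv_list sum_list_sum_nth atLeast0LessThan)

lemma rowop_L:
  assumes d: "distinct cs" and c: "\<forall>x z. c x z \<noteq> 0 \<longrightarrow> x \<in> R \<and> z \<notin> R"
  shows "equivm (matL cs f) (matL cs (\<lambda>x y. f x y + (\<Sum>z\<in>set cs. c x z * f z y)))"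
proof -
  let ?n = "length cs"
  define c' where "c' i l = c (cs ! i) (cs ! l)" for i l
  have c': "\<forall>i j. c' i j \<noteq> 0 \<longrightarrow> i \<in> {i. cs ! i \<in> R} \<and> j \<notin> {i. cs ! i \<in> R}"
    using c unfolding c'_def by auto
  have e: "equivm (matL cs f) (mat ?n ?n (\<lambda>(i,j). matL cs f $$ (i,j) + (\<Sum>l<?n. c' i l * matL cs f $$ (l,j))))"
    by (rule rowop_nat[OF c' matL_carrier])
  have "mat ?n ?n (\<lambda>(i,j). matL cs f $$ (i,j) + (\<Sum>l<?n. c' i l * matL cs f $$ (l,j)))
      = matL cs (\<lambda>x y. f x y + (\<Sum>z\<in>set cs. c x z * f z y))"
  proof (rule eq_matI)
    fix i j assume ij: "i < dim_row (matL cs (\<lambda>x y. f x y + (\<Sum>z\<in>set cs. c x z * f z y)))"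
       "j < dim_col (matL cs (\<lambda>x y. f x y + (\<Sum>z\<in>set cs. c x z * f z y)))"
    then have ij': "i < ?n" "j < ?n" unfolding matL_def by auto
    have "(\<Sum>l<?n. c' i l * matL cs f $$ (l,j)) = (\<Sum>l<?n. c (cs ! i) (cs ! l) * f (cs ! l) (cs ! j))"
      by (rule sum.cong) (use ij' in \<open>auto simp: matL_def c'_def\<close>)
    also have "\<dots> = (\<Sum>z\<in>set cs. c (cs ! i) z * f z (cs ! j))"
      by (rule sum_cs[OF d])
    finally show "mat ?n ?n (\<lambda>(i,j). matL cs f $$ (i,j) + (\<Sum>l<?n. c' i l * matL cs f $$ (l,j))) $$ (i, j) =
         matL cs (\<lambda>x y. f x y + (\<Sum>z\<in>set cs. c x z * f z y)) $$ (i, j)"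
      using ij' by (simp add: matL_def)
  qed (auto simp: matL_def)
  then show ?thesis using e by simp
qed

lemma colop_L:
  assumes d: "distinct cs" and c: "\<forall>z y. c z y \<noteq> 0 \<longrightarrow> y \<in> R \<and> z \<notin> R"
  shows "equivm (matL cs f) (matL cs (\<lambda>x y. f x y + (\<Sum>z\<in>set cs. f x z * c z y)))"
proof -
  let ?n = "length cs"
  define c' where "c' i l = c (cs ! i) (cs ! l)" for i l
  have c': "\<forall>i j. c' i j \<noteq> 0 \<longrightarrow> j \<in> {i. cs ! i \<in> R} \<and> i \<notin> {i. cs ! i \<in> R}"
    using c unfolding c'_def by auto
  have e: "equivm (matL cs f) (mat ?n ?n (\<lambda>(i,j). matL cs f $$ (i,j) + (\<Sum>l<?n. matL cs f $$ (i,l) * c' l j)))"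
    by (rule colop_nat[OF c' matL_carrier])
  have "mat ?n ?n (\<lambda>(i,j). matL cs f $$ (i,j) + (\<Sum>l<?n. matL cs f $$ (i,l) * c' l j))
      = matL cs (\<lambda>x y. f x y + (\<Sum>z\<in>set cs. f x z * c z y))"
  proof (rule eq_matI)
    fix i j assume ij: "i < dim_row (matL cs (\<lambda>x y. f x y + (\<Sum>z\<in>set cs. f x z * c z y)))"
       "j < dim_col (matL cs (\<lambda>x y. f x y + (\<Sum>z\<in>set cs. f x z * c z y)))"
    then have ij': "i < ?n" "j < ?n" unfolding matL_def by auto
    have "(\<Sum>l<?n. matL cs f $$ (i,l) * c' l j) = (\<Sum>l<?n. f (cs ! i) (cs ! l) * c (cs ! l) (cs ! j))"
      by (rule sum.cong) (use ij' in \<open>auto simp: matL_def c'_def\<close>)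
    also have "\<dots> = (\<Sum>z\<in>set cs. f (cs ! i) z * c z (cs ! j))"
      by (rule sum_cs[OF d])
    finally show "mat ?n ?n (\<lambda>(i,j). matL cs f $$ (i,j) + (\<Sum>l<?n. matL cs f $$ (i,l) * c' l j)) $$ (i, j) =
         matL cs (\<lambda>x y. f x y + (\<Sum>z\<in>set cs. f x z * c z y)) $$ (i, j)"
      using ij' by (simp add: matL_def)
  qed (auto simp: matL_def)
  then show ?thesis using e by simp
qed

lemma sum_bij_delta:
  fixes n :: nat
  assumes a: "bij_betw \<alpha> {..<n} {..<n}" and p: "p < n"
  shows "(\<Sum>i<n. if \<alpha> i = p then h i else 0) = (h (inv_into {..<n} \<alpha> p) :: int)"
proof -
  let ?i0 = "inv_into {..<n} \<alpha> p"
  have i0: "?i0 < n" "\<alpha> ?i0 = p"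
    using a p by (metis bij_betw_def f_inv_into_f inv_into_into lessThan_iff)+
  have "\<And>i. i < n \<Longrightarrow> (\<alpha> i = p) = (i = ?i0)"
    using a i0 unfolding bij_betw_def inj_on_def by auto
  then have "(\<Sum>i<n. if \<alpha> i = p then h i else 0) = (\<Sum>i<n. if i = ?i0 then h i else 0)"
    by (intro sum.cong) auto
  also have "\<dots> = h ?i0" using i0 by (subst sum.delta) auto
  finally show ?thesis .
qed

lemma sum_inj_delta:
  fixes n :: nat
  assumes a: "bij_betw \<alpha> {..<n} {..<n}" and i: "i < n"
  shows "(\<Sum>p<n. if \<alpha> i = p then h p else 0) = (h (\<alpha> i) :: int)"
proof -
  have "\<alpha> i < n" using a i by (auto simp: bij_betw_def)
  then show ?thesis by (subst sum.delta') auto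
qed

definition Pm :: "nat \<Rightarrow> (nat \<Rightarrow> nat) \<Rightarrow> (nat \<Rightarrow> int) \<Rightarrow> int mat" where
  "Pm n \<alpha> s = mat n n (\<lambda>(p,i). if \<alpha> i = p then s i else 0)"
definition PmT :: "nat \<Rightarrow> (nat \<Rightarrow> nat) \<Rightarrow> (nat \<Rightarrow> int) \<Rightarrow> int mat" where
  "PmT n \<alpha> s = mat n n (\<lambda>(i,p). if \<alpha> i = p then s i else 0)"

lemma Pm_unimod:
  assumes a: "bij_betw \<alpha> {..<n} {..<n}" and s: "\<forall>i<n. s i = 1 \<or> s i = -1"
  shows "unimod n (Pm n \<alpha> s) \<and> unimod n (PmT n \<alpha> s)"
proof -
  have ss: "i < n \<Longrightarrow> s i * s i = 1" for i using s by auto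
  have inj: "i < n \<Longrightarrow> i' < n \<Longrightarrow> \<alpha> i = \<alpha> i' \<Longrightarrow> i = i'" for i i'
    using a unfolding bij_betw_def inj_on_def by auto
  have i0: "p < n \<Longrightarrow> inv_into {..<n} \<alpha> p < n \<and> \<alpha> (inv_into {..<n} \<alpha> p) = p" for p
    using a by (metis bij_betw_def f_inv_into_f inv_into_into lessThan_iff)
  have 1: "Pm n \<alpha> s * PmT n \<alpha> s = 1\<^sub>m n"
  proof (rule eq_matI)
    fix p q assume pq: "p < dim_row (1\<^sub>m n)" "q < dim_col (1\<^sub>m n)"
    then have pq': "p < n" "q < n" by auto
    have "(Pm n \<alpha> s * PmT n \<alpha> s) $$ (p,q) = (\<Sum>i<n. (if \<alpha> i = p then s i else 0) * (if \<alpha> i = q then s i else 0))"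
      unfolding Pm_def PmT_def using pq' by (simp only: mult_mat_entry split)
    also have "\<dots> = (\<Sum>i<n. if \<alpha> i = p then s i * (if \<alpha> i = q then s i else 0) else 0)"
      by (rule sum.cong) auto
    also have "\<dots> = (if p = q then 1 else 0)"
      using i0[OF pq'(1)] ss by (subst sum_bij_delta[OF a pq'(1)]) auto
    finally show "(Pm n \<alpha> s * PmT n \<alpha> s) $$ (p,q) = 1\<^sub>m n $$ (p,q)" using pq' by simp
  qed (auto simp: Pm_def PmT_def)
  have 2: "PmT n \<alpha> s * Pm n \<alpha> s = 1\<^sub>m n"
  proof (rule eq_matI)
    fix i j assume ij: "i < dim_row (1\<^sub>m n)" "j < dim_col (1\<^sub>m n)"
    then have ij': "i < n" "j < n" by auto
    have "(PmT n \<alpha> s * Pm n \<alpha> s) $$ (i,j) = (\<Sum>p<n. (if \<alpha> i = p then s i else 0) * (if \<alpha> j = p then s j else 0))"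
      unfolding Pm_def PmT_def using ij' by (simp only: mult_mat_entry split)
    also have "\<dots> = (\<Sum>p<n. if \<alpha> i = p then s i * (if \<alpha> j = p then s j else 0) else 0)"
      by (rule sum.cong) auto
    also have "\<dots> = (if i = j then 1 else 0)"
      using inj[OF ij'] ss ij' by (subst sum_inj_delta[OF a ij'(1)]) auto
    finally show "(PmT n \<alpha> s * Pm n \<alpha> s) $$ (i,j) = 1\<^sub>m n $$ (i,j)" using ij' by simp
  qed (auto simp: Pm_def PmT_def)
  have c: "Pm n \<alpha> s \<in> carrier_mat n n" "PmT n \<alpha> s \<in> carrier_mat n n" by (auto simp: Pm_def PmT_def)
  have "unimod n (Pm n \<alpha> s)" unfolding unimod_def using 1 2 c by blast
  moreover have "unimod n (PmT n \<alpha> s)" unfolding unimod_def using 1 2 c by blast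
  ultimately show ?thesis by blast
qed

lemma perm_nat:
  assumes a: "bij_betw \<alpha> {..<n} {..<n}" and g: "bij_betw \<gamma> {..<n} {..<n}"
    and s: "\<forall>i<n. s i = 1 \<or> s i = -1" and A: "A \<in> carrier_mat n n"
  shows "equivm A (mat n n (\<lambda>(i,j). s i * A $$ (\<alpha> i, \<gamma> j)))" (is "equivm A ?A'")
proof -
  have ss: "i < n \<Longrightarrow> s i * s i = 1" for i using s by auto
  have i0: "p < n \<Longrightarrow> inv_into {..<n} \<alpha> p < n \<and> \<alpha> (inv_into {..<n} \<alpha> p) = p" for p
    using a by (metis bij_betw_def f_inv_into_f inv_into_into lessThan_iff)
  have gn: "j < n \<Longrightarrow> \<gamma> j < n" for j using g by (auto simp: bij_betw_def)
  have an: "j < n \<Longrightarrow> \<alpha> j < n" for j using a by (auto simp: bij_betw_def)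
  have 1: "Pm n \<alpha> s * ?A' = mat n n (\<lambda>(p,j). A $$ (p, \<gamma> j))"
  proof (rule eq_matI)
    fix p j assume pj: "p < dim_row (mat n n (\<lambda>(p,j). A $$ (p, \<gamma> j)))" "j < dim_col (mat n n (\<lambda>(p,j). A $$ (p, \<gamma> j)))"
    then have pj': "p < n" "j < n" by auto
    have "(Pm n \<alpha> s * ?A') $$ (p,j) = (\<Sum>i<n. (if \<alpha> i = p then s i else 0) * (s i * A $$ (\<alpha> i, \<gamma> j)))"
      unfolding Pm_def using pj' by (simp only: mult_mat_entry split)
    also have "\<dots> = (\<Sum>i<n. if \<alpha> i = p then s i * (s i * A $$ (\<alpha> i, \<gamma> j)) else 0)"
      by (rule sum.cong) auto
    also have "\<dots> = A $$ (p, \<gamma> j)"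
      using i0[OF pj'(1)] ss by (subst sum_bij_delta[OF a pj'(1)]) (auto simp: mult.assoc[symmetric])
    finally show "(Pm n \<alpha> s * ?A') $$ (p,j) = mat n n (\<lambda>(p,j). A $$ (p, \<gamma> j)) $$ (p,j)" using pj' by simp
  qed (auto simp: Pm_def)
  have 2: "mat n n (\<lambda>(p,j). A $$ (p, \<gamma> j)) * PmT n \<gamma> (\<lambda>_. 1) = A"
  proof (rule eq_matI)
    fix p q assume pq: "p < dim_row A" "q < dim_col A"
    then have pq': "p < n" "q < n" using A by auto
    have "(mat n n (\<lambda>(p,j). A $$ (p, \<gamma> j)) * PmT n \<gamma> (\<lambda>_. 1)) $$ (p,q)
        = (\<Sum>j<n. A $$ (p, \<gamma> j) * (if \<gamma> j = q then 1 else 0))"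
      unfolding PmT_def using pq' by (simp only: mult_mat_entry split)
    also have "\<dots> = (\<Sum>j<n. if \<gamma> j = q then A $$ (p, \<gamma> j) else 0)"
      by (rule sum.cong) auto
    also have "\<dots> = A $$ (p, q)"
      using pq' g by (subst sum_bij_delta[OF g pq'(2)]) (auto simp: bij_betw_def f_inv_into_f)
    finally show "(mat n n (\<lambda>(p,j). A $$ (p, \<gamma> j)) * PmT n \<gamma> (\<lambda>_. 1)) $$ (p,q) = A $$ (p,q)" .
  qed (use A in \<open>auto simp: PmT_def\<close>)
  have "A = Pm n \<alpha> s * ?A' * PmT n \<gamma> (\<lambda>_. 1)" using 1 2 by simp
  then show ?thesis unfolding equivm_def using A Pm_unimod[OF a s] Pm_unimod[OF g, of "\<lambda>_. 1"]
    by (intro exI[of _ "Pm n \<alpha> s"] exI[of _ "PmT n \<gamma> (\<lambda>_. 1)"]) auto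
qed



definition Mf :: "nat \<Rightarrow> 'b set \<Rightarrow> 'b set \<Rightarrow> ('b \<Rightarrow> 'b \<Rightarrow> int) \<Rightarrow> 'b \<Rightarrow> 'b \<Rightarrow> int" where
  "Mf k A B d x y = (if x \<in> A then (if y \<in> A then d x y else if y \<in> B then int k else 0)
     else if x \<in> B then (if y \<in> A then 1 else if y \<in> B then (if x = y then - (int k + 1) else 0) else 0)
     else (if y \<in> A \<or> y \<in> B then 0 else if x = y then -1 else 0))"

lemma S1: "finite L \<Longrightarrow> C \<in> L \<Longrightarrow> (\<Sum>z\<in>L. (if P \<and> z = C then a else 0) * h z) = (if P then a * h C else (0::int))"
proof -
  assume f: "finite L" and C: "C \<in> L"
  have "(\<Sum>z\<in>L. (if P \<and> z = C then a else 0) * h z) = (\<Sum>z\<in>L. if z = C then (if P then a * h z else 0) else 0)"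
    by (rule sum.cong) auto
  also have "\<dots> = (if P then a * h C else 0)" using f C by simp
  finally show ?thesis .
qed

lemma S2: "finite L \<Longrightarrow> C \<in> L \<Longrightarrow> (\<Sum>z\<in>L. h z * (if P \<and> z = C then a else 0)) = (if P then h C * a else (0::int))"
proof -
  assume f: "finite L" and C: "C \<in> L"
  have "(\<Sum>z\<in>L. h z * (if P \<and> z = C then a else 0)) = (\<Sum>z\<in>L. if z = C then (if P then h z * a else 0) else 0)"
    by (rule sum.cong) auto
  also have "\<dots> = (if P then h C * a else 0)" using f C by simp
  finally show ?thesis .
qed

lemma S3: "finite L \<Longrightarrow> S \<subseteq> L \<Longrightarrow> (\<Sum>z\<in>L. (if z \<in> S then a else 0) * h z) = a * (\<Sum>z\<in>S. h z :: int)"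
proof -
  assume f: "finite L" and S: "S \<subseteq> L"
  have "(\<Sum>z\<in>L. (if z \<in> S then a else 0) * h z) = (\<Sum>z\<in>L. if z \<in> S then a * h z else 0)"
    by (rule sum.cong) auto
  also have "\<dots> = (\<Sum>z\<in>L \<inter> S. a * h z)" using f by (simp add: sum.inter_restrict)
  also have "L \<inter> S = S" using S by auto
  finally show ?thesis by (simp add: sum_distrib_left)
qed

lemma S4: "finite L \<Longrightarrow> S \<subseteq> L \<Longrightarrow> (\<Sum>z\<in>L. h z * (if P \<and> z \<in> S then 1 else 0)) = (if P then (\<Sum>z\<in>S. h z) else (0::int))"
proof -
  assume f: "finite L" and S: "S \<subseteq> L"
  have "(\<Sum>z\<in>L. h z * (if P \<and> z \<in> S then 1 else 0)) = (\<Sum>z\<in>L. if z \<in> S then (if P then h z else 0) else 0)"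
    by (rule sum.cong) auto
  also have "\<dots> = (\<Sum>z\<in>L \<inter> S. (if P then h z else 0))" using f by (simp add: sum.inter_restrict)
  also have "L \<inter> S = S" using S by auto
  finally show ?thesis by auto
qed

lemma sum_delta_in: "finite S \<Longrightarrow> (\<Sum>z\<in>S. if z = x then a else 0) = (if x \<in> S then a else (0::int))"
  by (simp add: sum.delta)

lemma step_red:
  fixes d d' :: "'b set \<Rightarrow> 'b set \<Rightarrow> int"
  assumes dist: "distinct cs" and L: "L = set cs"
    and sub: "A \<subseteq> L" "Nn \<subseteq> L" "B \<subseteq> L"
    and disj: "A \<inter> Nn = {}" "A \<inter> B = {}" "Nn \<inter> B = {}"
    and C: "C \<in> A" and t1: "t1 \<in> Nn" and cardN: "card Nn = k"
    and d1: "\<And>x y. x \<in> A \<Longrightarrow> y \<in> A \<Longrightarrow> d' x y = d x y"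
    and d2: "\<And>x y. x \<in> Nn \<Longrightarrow> y \<in> A \<Longrightarrow> d' x y = d C y + 1"
    and d3: "\<And>x y. x \<in> A \<Longrightarrow> y \<in> Nn \<Longrightarrow> d' x y = d x C + 1"
    and d4: "\<And>x y. x \<in> Nn \<Longrightarrow> y \<in> Nn \<Longrightarrow> d' x y = (if x = y then 0 else 1)"
    and d0: "d C C = 0"
  shows "equivm (matL cs (Mf k (A \<union> Nn) B d')) (matL cs (Mf k A (insert t1 B) d))"
proof -
  have fL: "finite L" using L by simp
  have CL: "C \<in> L" using C sub by auto
  have t1L: "t1 \<in> L" using t1 sub by auto
  have fN: "finite Nn" using sub(2) fL by (rule finite_subset)
  have cardN1: "card (Nn - {t1}) = k - 1" using cardN t1 fN by simp
  have kpos: "k \<ge> 1" using cardN t1 fN by (metis card_0_eq empty_iff less_one not_le)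
  define g0 where "g0 = Mf k (A \<union> Nn) B d'"
  define g1 where "g1 x y = (if x \<in> Nn then (if y \<in> A then 1 else if y \<in> Nn then (if x = y then -1 else 0) else 0)
       else g0 x y)" for x y
  define g2 where "g2 x y = (if y \<in> Nn then (if x \<in> A then 1 else if x \<in> Nn then (if x = y then -2 else -1) else 0)
       else g1 x y)" for x y
  define g3 where "g3 x y = (if x \<in> Nn - {t1} then (if y \<in> Nn then (if y = t1 then 1 else 0) - (if y = x then 1 else 0) else 0)
       else g2 x y)" for x y
  define g4 where "g4 x y = (if y = t1 then (if x \<in> A then int k else if x = t1 then - (int k + 1) else 0)
       else g3 x y)" for x y
  have e1: "equivm (matL cs g0) (matL cs g1)"
  proof -
    have "equivm (matL cs g0) (matL cs (\<lambda>x y. g0 x y + (\<Sum>z\<in>set cs. (if x \<in> Nn \<and> z = C then -1 else 0) * g0 z y)))"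
      by (rule rowop_L[OF dist, of _ Nn]) (use C disj in auto)
    also have "matL cs (\<lambda>x y. g0 x y + (\<Sum>z\<in>set cs. (if x \<in> Nn \<and> z = C then -1 else 0) * g0 z y)) = matL cs g1"
    proof (rule matL_cong)
      fix x y assume xy: "x \<in> set cs" "y \<in> set cs"
      have "(\<Sum>z\<in>set cs. (if x \<in> Nn \<and> z = C then -1 else 0) * g0 z y) = (if x \<in> Nn then -1 * g0 C y else 0)"
        using S1[OF fL CL] L by simp
      then show "g0 x y + (\<Sum>z\<in>set cs. (if x \<in> Nn \<and> z = C then -1 else 0) * g0 z y) = g1 x y"
        unfolding g1_def g0_def Mf_def using disj C d0 d1 d2 d3 d4 by auto
    qed
    finally show ?thesis .
  qed
  have e2: "equivm (matL cs g1) (matL cs g2)"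
  proof -
    have "equivm (matL cs g1) (matL cs (\<lambda>x y. g1 x y + (\<Sum>z\<in>set cs. g1 x z * (if y \<in> Nn \<and> z = C then -1 else 0))))"
      by (rule colop_L[OF dist, of _ Nn]) (use C disj in auto)
    also have "matL cs (\<lambda>x y. g1 x y + (\<Sum>z\<in>set cs. g1 x z * (if y \<in> Nn \<and> z = C then -1 else 0))) = matL cs g2"
    proof (rule matL_cong)
      fix x y assume xy: "x \<in> set cs" "y \<in> set cs"
      have "(\<Sum>z\<in>set cs. g1 x z * (if y \<in> Nn \<and> z = C then -1 else 0)) = (if y \<in> Nn then g1 x C * -1 else 0)"
        using S2[OF fL CL] L by simp
      then show "g1 x y + (\<Sum>z\<in>set cs. g1 x z * (if y \<in> Nn \<and> z = C then -1 else 0)) = g2 x y"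
        unfolding g2_def g1_def g0_def Mf_def using disj C d0 d1 d2 d3 d4 by auto
    qed
    finally show ?thesis .
  qed
  have e3: "equivm (matL cs g2) (matL cs g3)"
  proof -
    have "equivm (matL cs g2) (matL cs (\<lambda>x y. g2 x y + (\<Sum>z\<in>set cs. (if x \<in> Nn - {t1} \<and> z = t1 then -1 else 0) * g2 z y)))"
      by (rule rowop_L[OF dist, of _ "Nn - {t1}"]) auto
    also have "matL cs (\<lambda>x y. g2 x y + (\<Sum>z\<in>set cs. (if x \<in> Nn - {t1} \<and> z = t1 then -1 else 0) * g2 z y)) = matL cs g3"
    proof (rule matL_cong)
      fix x y assume xy: "x \<in> set cs" "y \<in> set cs"
      have "(\<Sum>z\<in>set cs. (if x \<in> Nn - {t1} \<and> z = t1 then -1 else 0) * g2 z y) = (if x \<in> Nn - {t1} then -1 * g2 t1 y else 0)"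
        using S1[OF fL t1L, of "x \<in> Nn - {t1}" "-1" "\<lambda>z. g2 z y"] unfolding L .
      then show "g2 x y + (\<Sum>z\<in>set cs. (if x \<in> Nn - {t1} \<and> z = t1 then -1 else 0) * g2 z y) = g3 x y"
        unfolding g3_def g2_def g1_def g0_def Mf_def using disj C t1 d0 d1 d2 d3 d4 by auto
    qed
    finally show ?thesis .
  qed
  have sum4: "(\<Sum>z\<in>Nn - {t1}. g3 x z) = (if x \<in> A then int k - 1 else if x = t1 then - (int k - 1)
      else if x \<in> Nn then -1 else 0)" if x: "x \<in> L" for x
  proof -
    have "(\<Sum>z\<in>Nn - {t1}. g3 x z) = (\<Sum>z\<in>Nn - {t1}. (if x \<in> A then 1 else if x = t1 then -1 else 0)
         - (if z = x then 1 else 0))"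
      by (rule sum.cong) (use disj t1 in \<open>auto simp: g3_def g2_def\<close>)
    also have "\<dots> = of_nat (card (Nn - {t1})) * (if x \<in> A then 1 else if x = t1 then -1 else 0)
         - (if x \<in> Nn - {t1} then 1 else 0)"
      using fN by (simp add: sum_subtractf sum_delta_in)
    also have "\<dots> = (if x \<in> A then int k - 1 else if x = t1 then - (int k - 1)
      else if x \<in> Nn then -1 else 0)"
      using cardN1 kpos disj by (auto simp: of_nat_diff)
    finally show ?thesis .
  qed
  have e4: "equivm (matL cs g3) (matL cs g4)"
  proof -
    have "equivm (matL cs g3) (matL cs (\<lambda>x y. g3 x y + (\<Sum>z\<in>set cs. g3 x z * (if y = t1 \<and> z \<in> Nn - {t1} then 1 else 0))))"
      by (rule colop_L[OF dist, of _ "{t1}"]) auto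
    also have "matL cs (\<lambda>x y. g3 x y + (\<Sum>z\<in>set cs. g3 x z * (if y = t1 \<and> z \<in> Nn - {t1} then 1 else 0))) = matL cs g4"
    proof (rule matL_cong)
      fix x y assume xy: "x \<in> set cs" "y \<in> set cs"
      have "(\<Sum>z\<in>set cs. g3 x z * (if y = t1 \<and> z \<in> Nn - {t1} then 1 else 0)) = (if y = t1 then (\<Sum>z\<in>Nn - {t1}. g3 x z) else 0)"
        using S4[OF fL, of "Nn - {t1}" "\<lambda>z. g3 x z" "y = t1"] sub unfolding L by blast
      then show "g3 x y + (\<Sum>z\<in>set cs. g3 x z * (if y = t1 \<and> z \<in> Nn - {t1} then 1 else 0)) = g4 x y"
        unfolding g4_def using sum4[of x] xy L disj C t1
        by (auto simp: g3_def g2_def g1_def g0_def Mf_def d1 d2 d3 d4)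
    qed
    finally show ?thesis .
  qed
  define a where "a x = (if x \<in> A then 1 else if x = t1 then -1 else (0::int))" for x
  have sum5: "(\<Sum>z\<in>Nn - {t1}. g4 z y) = (if y \<in> Nn - {t1} then -1 else 0)" if y: "y \<in> L" for y
  proof -
    have "(\<Sum>z\<in>Nn - {t1}. g4 z y) = (\<Sum>z\<in>Nn - {t1}. if z = y then (if y \<in> Nn - {t1} then -1 else 0) else 0)"
      by (rule sum.cong) (use disj t1 in \<open>auto simp: g4_def g3_def\<close>)
    also have "\<dots> = (if y \<in> Nn - {t1} then -1 else 0)" using fN by (simp add: sum_delta_in)
    finally show ?thesis .
  qed
  have e5: "equivm (matL cs g4) (matL cs (Mf k A (insert t1 B) d))"
  proof -
    have "equivm (matL cs g4) (matL cs (\<lambda>x y. g4 x y + (\<Sum>z\<in>set cs. (if z \<in> Nn - {t1} then a x else 0) * g4 z y)))"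
      by (rule rowop_L[OF dist, of _ "A \<union> {t1}"]) (use disj t1 in \<open>auto simp: a_def\<close>)
    also have "matL cs (\<lambda>x y. g4 x y + (\<Sum>z\<in>set cs. (if z \<in> Nn - {t1} then a x else 0) * g4 z y)) = matL cs (Mf k A (insert t1 B) d)"
    proof (rule matL_cong)
      fix x y assume xy: "x \<in> set cs" "y \<in> set cs"
      have "(\<Sum>z\<in>set cs. (if z \<in> Nn - {t1} then a x else 0) * g4 z y) = a x * (\<Sum>z\<in>Nn - {t1}. g4 z y)"
        using S3[OF fL, of "Nn - {t1}" "a x" "\<lambda>z. g4 z y"] sub unfolding L by blast
      then show "g4 x y + (\<Sum>z\<in>set cs. (if z \<in> Nn - {t1} then a x else 0) * g4 z y) = Mf k A (insert t1 B) d x y"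
        using sum5[of y] xy L disj C t1
        by (auto simp: a_def g4_def g3_def g2_def g1_def g0_def Mf_def d1 d2 d3 d4)
    qed
    finally show ?thesis .
  qed
  show ?thesis using e1 e2 e3 e4 e5 equivm_trans unfolding g0_def by blast
qed



definition Ff :: "nat \<Rightarrow> nat \<Rightarrow> 'b \<Rightarrow> 'b \<Rightarrow> 'b \<Rightarrow> 'b set \<Rightarrow> 'b \<Rightarrow> 'b \<Rightarrow> int" where
  "Ff k r c0 b1 b2 R3 x y = (if x = b1 then (if y = c0 then 1 else 0)
     else if x = c0 then (if y = b2 then -1 else 0)
     else if x = b2 then (if y = b1 then - ((int k + 1) * int r * int k) else 0)
     else if x \<in> R3 then (if y = x then - (int k + 1) else 0)
     else (if y = x then -1 else 0))"

lemma final_red: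
  fixes d :: "'b \<Rightarrow> 'b \<Rightarrow> int"
  assumes dist: "distinct cs" and L: "L = set cs"
    and sub: "c0 \<in> L" "B' \<subseteq> L" and c0: "c0 \<notin> B'"
    and b: "b1 \<in> B'" "b2 \<in> B'" "b1 \<noteq> b2" and r: "card B' = r"
    and d0: "d c0 c0 = 0"
  shows "equivm (matL cs (Mf k {c0} B' d)) (matL cs (Ff k r c0 b1 b2 (B' - {b1, b2})))"
proof -
  have fL: "finite L" using L by simp
  have b1L: "b1 \<in> L" "b2 \<in> L" using b sub by auto
  have fB: "finite B'" using sub(2) fL by (rule finite_subset)
  have cardB1: "card (B' - {b1}) = r - 1" using r b fB by simp
  have rpos: "r \<ge> 1" using r b fB by (metis card_0_eq empty_iff less_one not_le)
  define R3 where "R3 = B' - {b1, b2}"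
  define h0 where "h0 = Mf k {c0} B' d"
  define h1 where "h1 x y = (if x \<in> B' - {b1} then (if y = b1 then int k + 1 else if y = x then - (int k + 1) else 0) else h0 x y)" for x y
  define h2 where "h2 x y = (if y = b1 then (if x = c0 then int k else if x = b1 then 0 else if x \<in> B' then int k + 1 else 0) else h1 x y)" for x y
  define h3 where "h3 x y = (if y = b1 then (if x = c0 then int r * int k else 0) else h2 x y)" for x y
  define h4 where "h4 x y = (if x = c0 then (if y = b2 then -1 else h3 c0 y) else h3 x y)" for x y
  define h5 where "h5 x y = (if x = b2 then (if y = b1 then - ((int k + 1) * int r * int k) else if y \<in> R3 then - ((int k + 1) * int k) else 0) else h4 x y)" for x y
  define h6 where "h6 x y = (if x = b1 then (if y = c0 then 1 else 0)
     else if x = c0 then (if y = b2 then -1 else 0)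
     else if x = b2 then (if y = b1 then - ((int k + 1) * int r * int k) else if y \<in> R3 then - ((int k + 1) * int k) else 0)
     else if x \<in> R3 then (if y = x then - (int k + 1) else 0)
     else (if y = x then -1 else 0))" for x y
  have e1: "equivm (matL cs h0) (matL cs h1)"
  proof -
    have "equivm (matL cs h0) (matL cs (\<lambda>x y. h0 x y + (\<Sum>z\<in>set cs. (if x \<in> B' - {b1} \<and> z = b1 then -1 else 0) * h0 z y)))"
      by (rule rowop_L[OF dist, of _ "B' - {b1}"]) auto
    also have "matL cs (\<lambda>x y. h0 x y + (\<Sum>z\<in>set cs. (if x \<in> B' - {b1} \<and> z = b1 then -1 else 0) * h0 z y)) = matL cs h1"
    proof (rule matL_cong)
      fix x y assume xy: "x \<in> set cs" "y \<in> set cs"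
      have "(\<Sum>z\<in>set cs. (if x \<in> B' - {b1} \<and> z = b1 then -1 else 0) * h0 z y) = (if x \<in> B' - {b1} then -1 * h0 b1 y else 0)"
        using S1[OF fL b1L(1), of "x \<in> B' - {b1}" "-1" "\<lambda>z. h0 z y"] unfolding L .
      then show "h0 x y + (\<Sum>z\<in>set cs. (if x \<in> B' - {b1} \<and> z = b1 then -1 else 0) * h0 z y) = h1 x y"
        unfolding h1_def h0_def Mf_def using c0 b by auto
    qed
    finally show ?thesis .
  qed
  have e2: "equivm (matL cs h1) (matL cs h2)"
  proof -
    have "equivm (matL cs h1) (matL cs (\<lambda>x y. h1 x y + (\<Sum>z\<in>set cs. h1 x z * (if y = b1 \<and> z = c0 then int k + 1 else 0))))"
      by (rule colop_L[OF dist, of _ "{b1}"]) (use c0 b in auto)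
    also have "matL cs (\<lambda>x y. h1 x y + (\<Sum>z\<in>set cs. h1 x z * (if y = b1 \<and> z = c0 then int k + 1 else 0))) = matL cs h2"
    proof (rule matL_cong)
      fix x y assume xy: "x \<in> set cs" "y \<in> set cs"
      have "(\<Sum>z\<in>set cs. h1 x z * (if y = b1 \<and> z = c0 then int k + 1 else 0)) = (if y = b1 then h1 x c0 * (int k + 1) else 0)"
        using S2[OF fL sub(1), of "\<lambda>z. h1 x z" "y = b1" "int k + 1"] unfolding L .
      then show "h1 x y + (\<Sum>z\<in>set cs. h1 x z * (if y = b1 \<and> z = c0 then int k + 1 else 0)) = h2 x y"
        unfolding h2_def h1_def h0_def Mf_def using c0 b d0 by auto
    qed
    finally show ?thesis .
  qed
  have sum3: "(\<Sum>z\<in>B' - {b1}. h2 x z) = (if x = c0 then int (r - 1) * int k else if x \<in> B' - {b1} then - (int k + 1) else 0)"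
    if x: "x \<in> L" for x
  proof -
    have "(\<Sum>z\<in>B' - {b1}. h2 x z) = (\<Sum>z\<in>B' - {b1}. (if x = c0 then int k else 0) + (if z = x then (if x \<in> B' - {b1} then - (int k + 1) else 0) else 0))"
      by (rule sum.cong) (use c0 b in \<open>auto simp: h2_def h1_def h0_def Mf_def\<close>)
    also have "\<dots> = of_nat (card (B' - {b1})) * (if x = c0 then int k else 0) + (if x \<in> B' - {b1} then - (int k + 1) else 0)"
      using fB by (simp add: sum.distrib sum_delta_in)
    also have "\<dots> = (if x = c0 then int (r - 1) * int k else if x \<in> B' - {b1} then - (int k + 1) else 0)"
      using cardB1 c0 by auto
    finally show ?thesis .
  qed
  have e3: "equivm (matL cs h2) (matL cs h3)"
  proof -
    have "equivm (matL cs h2) (matL cs (\<lambda>x y. h2 x y + (\<Sum>z\<in>set cs. h2 x z * (if y = b1 \<and> z \<in> B' - {b1} then 1 else 0))))"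
      by (rule colop_L[OF dist, of _ "{b1}"]) auto
    also have "matL cs (\<lambda>x y. h2 x y + (\<Sum>z\<in>set cs. h2 x z * (if y = b1 \<and> z \<in> B' - {b1} then 1 else 0))) = matL cs h3"
    proof (rule matL_cong)
      fix x y assume xy: "x \<in> set cs" "y \<in> set cs"
      have "(\<Sum>z\<in>set cs. h2 x z * (if y = b1 \<and> z \<in> B' - {b1} then 1 else 0)) = (if y = b1 then (\<Sum>z\<in>B' - {b1}. h2 x z) else 0)"
        using S4[OF fL, of "B' - {b1}" "\<lambda>z. h2 x z" "y = b1"] sub unfolding L by blast
      moreover have "int r * int k = int k + int (r - 1) * int k" using rpos
        by (metis add.commute add_diff_inverse_nat distrib_right less_one mult_1 not_le of_nat_add of_nat_1)
      ultimately show "h2 x y + (\<Sum>z\<in>set cs. h2 x z * (if y = b1 \<and> z \<in> B' - {b1} then 1 else 0)) = h3 x y"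
        using sum3[of x] xy L c0 b d0 by (auto simp: h3_def h2_def h1_def h0_def Mf_def)
    qed
    finally show ?thesis .
  qed
  have e4: "equivm (matL cs h3) (matL cs h4)"
  proof -
    have "equivm (matL cs h3) (matL cs (\<lambda>x y. h3 x y + (\<Sum>z\<in>set cs. (if x = c0 \<and> z = b2 then 1 else 0) * h3 z y)))"
      by (rule rowop_L[OF dist, of _ "{c0}"]) (use c0 b in auto)
    also have "matL cs (\<lambda>x y. h3 x y + (\<Sum>z\<in>set cs. (if x = c0 \<and> z = b2 then 1 else 0) * h3 z y)) = matL cs h4"
    proof (rule matL_cong)
      fix x y assume xy: "x \<in> set cs" "y \<in> set cs"
      have "(\<Sum>z\<in>set cs. (if x = c0 \<and> z = b2 then 1 else 0) * h3 z y) = (if x = c0 then 1 * h3 b2 y else 0)"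
        using S1[OF fL b1L(2), of "x = c0" "1" "\<lambda>z. h3 z y"] unfolding L .
      then show "h3 x y + (\<Sum>z\<in>set cs. (if x = c0 \<and> z = b2 then 1 else 0) * h3 z y) = h4 x y"
        unfolding h4_def h3_def h2_def h1_def h0_def Mf_def using c0 b by auto
    qed
    finally show ?thesis .
  qed
  have e5: "equivm (matL cs h4) (matL cs h5)"
  proof -
    have "equivm (matL cs h4) (matL cs (\<lambda>x y. h4 x y + (\<Sum>z\<in>set cs. (if x = b2 \<and> z = c0 then - (int k + 1) else 0) * h4 z y)))"
      by (rule rowop_L[OF dist, of _ "{b2}"]) (use c0 b in auto)
    also have "matL cs (\<lambda>x y. h4 x y + (\<Sum>z\<in>set cs. (if x = b2 \<and> z = c0 then - (int k + 1) else 0) * h4 z y)) = matL cs h5"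
    proof (rule matL_cong)
      fix x y assume xy: "x \<in> set cs" "y \<in> set cs"
      have "(\<Sum>z\<in>set cs. (if x = b2 \<and> z = c0 then - (int k + 1) else 0) * h4 z y) = (if x = b2 then - (int k + 1) * h4 c0 y else 0)"
        using S1[OF fL sub(1), of "x = b2" "- (int k + 1)" "\<lambda>z. h4 z y"] unfolding L .
      then show "h4 x y + (\<Sum>z\<in>set cs. (if x = b2 \<and> z = c0 then - (int k + 1) else 0) * h4 z y) = h5 x y"
        unfolding h5_def h4_def h3_def h2_def h1_def h0_def Mf_def R3_def using c0 b d0 by (auto simp: algebra_simps)
    qed
    finally show ?thesis .
  qed
  define e where "e y = (if y = b1 then int r * int k else if y \<in> R3 then int k else 0)" for y
  have e6: "equivm (matL cs h5) (matL cs h6)"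
  proof -
    have "equivm (matL cs h5) (matL cs (\<lambda>x y. h5 x y + (\<Sum>z\<in>set cs. h5 x z * (if y \<in> insert b1 R3 \<and> z = b2 then e y else 0))))"
      by (rule colop_L[OF dist, of _ "insert b1 R3"]) (use c0 b in \<open>auto simp: R3_def\<close>)
    also have "matL cs (\<lambda>x y. h5 x y + (\<Sum>z\<in>set cs. h5 x z * (if y \<in> insert b1 R3 \<and> z = b2 then e y else 0))) = matL cs h6"
    proof (rule matL_cong)
      fix x y assume xy: "x \<in> set cs" "y \<in> set cs"
      have "(\<Sum>z\<in>set cs. h5 x z * (if y \<in> insert b1 R3 \<and> z = b2 then e y else 0)) = (if y \<in> insert b1 R3 then h5 x b2 * e y else 0)"
        using S2[OF fL b1L(2), of "\<lambda>z. h5 x z" "y \<in> insert b1 R3" "e y"] unfolding L .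
      then show "h5 x y + (\<Sum>z\<in>set cs. h5 x z * (if y \<in> insert b1 R3 \<and> z = b2 then e y else 0)) = h6 x y"
        unfolding h6_def h5_def h4_def h3_def h2_def h1_def h0_def Mf_def R3_def e_def using c0 b d0 by (auto simp: algebra_simps)
    qed
    finally show ?thesis .
  qed
  have fR3: "finite R3" unfolding R3_def using fB by simp
  have sum7: "(\<Sum>z\<in>R3. h6 z y) = (if y \<in> R3 then - (int k + 1) else 0)" if y: "y \<in> L" for y
  proof -
    have "(\<Sum>z\<in>R3. h6 z y) = (\<Sum>z\<in>R3. if z = y then (if y \<in> R3 then - (int k + 1) else 0) else 0)"
      by (rule sum.cong) (use c0 b in \<open>auto simp: h6_def R3_def\<close>)
    also have "\<dots> = (if y \<in> R3 then - (int k + 1) else 0)" using fR3 by (simp add: sum_delta_in)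
    finally show ?thesis .
  qed
  have e7: "equivm (matL cs h6) (matL cs (Ff k r c0 b1 b2 R3))"
  proof -
    have "equivm (matL cs h6) (matL cs (\<lambda>x y. h6 x y + (\<Sum>z\<in>set cs. (if z \<in> R3 then (if x = b2 then - int k else 0) else 0) * h6 z y)))"
      by (rule rowop_L[OF dist, of _ "{b2}"]) (auto simp: R3_def)
    also have "matL cs (\<lambda>x y. h6 x y + (\<Sum>z\<in>set cs. (if z \<in> R3 then (if x = b2 then - int k else 0) else 0) * h6 z y)) = matL cs (Ff k r c0 b1 b2 R3)"
    proof (rule matL_cong)
      fix x y assume xy: "x \<in> set cs" "y \<in> set cs"
      have "(\<Sum>z\<in>set cs. (if z \<in> R3 then (if x = b2 then - int k else 0) else 0) * h6 z y) = (if x = b2 then - int k else 0) * (\<Sum>z\<in>R3. h6 z y)"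
        using S3[OF fL, of R3 "if x = b2 then - int k else 0" "\<lambda>z. h6 z y"] sub unfolding L R3_def by blast
      then show "h6 x y + (\<Sum>z\<in>set cs. (if z \<in> R3 then (if x = b2 then - int k else 0) else 0) * h6 z y) = Ff k r c0 b1 b2 R3 x y"
        using sum7[of y] xy L c0 b d0
        by (auto simp: Ff_def h6_def R3_def algebra_simps)
    qed
    finally show ?thesis .
  qed
  show ?thesis using e1 e2 e3 e4 e5 e6 e7 equivm_trans unfolding h0_def R3_def by blast
qed



lemma final_perm:
  assumes dist: "distinct cs" and L: "L = set cs"
    and sub: "c0 \<in> L" "B' \<subseteq> L" and c0: "c0 \<notin> B'"
    and b: "b1 \<in> B'" "b2 \<in> B'" "b1 \<noteq> b2" and r: "card B' = r"
    and a: "a = card (L - insert c0 B') + 2" and bb: "bb = r - 2"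
  shows "equivm (matL cs (Ff k r c0 b1 b2 (B' - {b1, b2}))) (diag3 a bb (int k + 1) (int k * (int k + 1) * int r))"
proof -
  define N where "N = length cs"
  define U where "U = L - insert c0 B'"
  define R3 where "R3 = B' - {b1, b2}"
  have fL: "finite L" using L by simp
  have fU: "finite U" unfolding U_def using fL by simp
  have fB: "finite B'" using sub(2) fL by (rule finite_subset)
  have fR3: "finite R3" unfolding R3_def using fB by simp
  obtain uu where uu: "set uu = U" "distinct uu" using finite_distinct_list[OF fU] by blast
  obtain rs where rs: "set rs = R3" "distinct rs" using finite_distinct_list[OF fR3] by blast
  have cR3: "card R3 = bb" unfolding R3_def bb r[symmetric] using b fB by (simp add: card_Diff_subset)
  have cU: "card U + 2 = a" unfolding U_def a by simp
  define ls where "ls = (b1 # c0 # uu) @ (rs @ [b2])"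
  have lenA: "length (b1 # c0 # uu) = a" using uu cU distinct_card by fastforce
  have lenR: "length rs = bb" using rs cR3 distinct_card by fastforce
  have setls: "set ls = L" unfolding ls_def using uu rs sub b c0 unfolding U_def R3_def by auto
  have distls: "distinct ls" unfolding ls_def using uu rs sub b c0 unfolding U_def R3_def by auto
  have lenls: "length ls = N"
    using distinct_card[OF distls] distinct_card[OF dist] setls L unfolding N_def by simp
  have Na: "N = a + bb + 1" using lenls lenA lenR unfolding ls_def by simp
  have P1: "i < a \<Longrightarrow> ls ! i \<in> insert b1 (insert c0 U)" for i
    unfolding ls_def using lenA uu by (auto simp: nth_append nth_Cons split: nat.splits)
  have P2: "a \<le> i \<Longrightarrow> i < a + bb \<Longrightarrow> ls ! i \<in> R3" for i
    unfolding ls_def using lenA lenR rs by (auto simp: nth_append)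
  have P3: "ls ! (a + bb) = b2"
    unfolding ls_def using lenA lenR by (auto simp: nth_append)
  define cm where "cm y = (if y = b1 then c0 else if y = c0 then b2 else if y = b2 then b1 else y)" for y
  define cm' where "cm' y = (if y = c0 then b1 else if y = b2 then c0 else if y = b1 then b2 else y)" for y
  have ne: "b1 \<noteq> c0" "b2 \<noteq> c0" "b1 \<noteq> b2" "c0 \<noteq> b1" "c0 \<noteq> b2" "b2 \<noteq> b1" using b c0 by auto
  have b1L: "b1 \<in> L" "b2 \<in> L" using b sub by auto
  have bcm: "bij_betw cm L L"
  proof (rule bij_betwI[of _ _ _ cm'])
    show "cm \<in> L \<rightarrow> L" unfolding cm_def using b1L sub(1) by simp
    show "cm' \<in> L \<rightarrow> L" unfolding cm'_def using b1L sub(1) by simp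
    show "cm' (cm y) = y" if "y \<in> L" for y unfolding cm_def cm'_def using ne by simp
    show "cm (cm' y) = y" if "y \<in> L" for y unfolding cm_def cm'_def using ne by simp
  qed
  have cmL: "y \<in> L \<Longrightarrow> cm y \<in> L" for y using bcm by (auto simp: bij_betw_def)
  define v where "v x = (if x = b1 then 1 else if x = c0 then -1 else if x = b2 then - ((int k + 1) * int r * int k)
     else if x \<in> R3 then - (int k + 1) else -1)" for x
  have Ffcm: "Ff k r c0 b1 b2 R3 x y' = (if y' = cm x then v x else 0)" for x y'
    by (cases "x = b1"; cases "x = c0"; cases "x = b2") (simp_all add: Ff_def cm_def v_def ne)
  have cminj: "(cm y = cm x) = (y = x)" for x y
    by (cases "x = b1"; cases "x = c0"; cases "x = b2"; cases "y = b1"; cases "y = c0"; cases "y = b2")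
       (simp_all add: cm_def ne)
  have Ffc: "Ff k r c0 b1 b2 R3 x (cm y) = (if x = y then v x else 0)" for x y
    using Ffcm[of x "cm y"] cminj by auto
  define idx where "idx = inv_into {..<N} (nth cs)"
  have bcs: "bij_betw (nth cs) {..<N} L" by (rule bij_betw_nth[OF dist]) (auto simp: N_def L)
  have bidx: "bij_betw idx L {..<N}" unfolding idx_def by (rule bij_betw_inv_into[OF bcs])
  have idx: "z \<in> L \<Longrightarrow> cs ! (idx z) = z" for z
    unfolding idx_def using bcs by (simp add: bij_betw_def f_inv_into_f)
  have bls: "bij_betw (nth ls) {..<N} L" by (rule bij_betw_nth[OF distls]) (auto simp: lenls setls)
  define \<alpha> where "\<alpha> i = idx (ls ! i)" for i
  define \<gamma> where "\<gamma> j = idx (cm (ls ! j))" for j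
  have ba: "bij_betw \<alpha> {..<N} {..<N}" unfolding \<alpha>_def
    using bij_betw_trans[OF bls bidx] by (simp add: comp_def)
  have bg: "bij_betw \<gamma> {..<N} {..<N}" unfolding \<gamma>_def
    using bij_betw_trans[OF bij_betw_trans[OF bls bcm] bidx] by (simp add: comp_def)
  define s where "s i = (if ls ! i = b1 then 1 else (-1::int))" for i
  have s: "\<forall>i<N. s i = 1 \<or> s i = -1" unfolding s_def by auto
  have e: "equivm (matL cs (Ff k r c0 b1 b2 R3)) (mat N N (\<lambda>(i,j). s i * matL cs (Ff k r c0 b1 b2 R3) $$ (\<alpha> i, \<gamma> j)))"
    by (rule perm_nat[OF ba bg s]) (simp add: matL_carrier N_def)
  have lsL: "i < N \<Longrightarrow> ls ! i \<in> L" for i using lenls setls nth_mem by blast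
  have "mat N N (\<lambda>(i,j). s i * matL cs (Ff k r c0 b1 b2 R3) $$ (\<alpha> i, \<gamma> j)) = diag3 a bb (int k + 1) (int k * (int k + 1) * int r)"
  proof (rule eq_matI)
    fix i j assume ij: "i < dim_row (diag3 a bb (int k + 1) (int k * (int k + 1) * int r))"
      "j < dim_col (diag3 a bb (int k + 1) (int k * (int k + 1) * int r))"
    then have ij': "i < N" "j < N" using Na by (auto simp: diag3_def)
    have ai: "\<alpha> i < N" "\<gamma> j < N" using ba bg ij' by (auto simp: bij_betw_def)
    have m: "matL cs (Ff k r c0 b1 b2 R3) $$ (\<alpha> i, \<gamma> j) = Ff k r c0 b1 b2 R3 (ls ! i) (cm (ls ! j))"
      using ai unfolding matL_def N_def \<alpha>_def \<gamma>_def
      using idx[OF lsL[OF ij'(1)]] idx[OF cmL[OF lsL[OF ij'(2)]]] ij' by (simp add: N_def)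
    have eqiff: "(ls ! i = ls ! j) = (i = j)" using distls ij' lenls by (simp add: nth_eq_iff_index_eq)
    show "mat N N (\<lambda>(i,j). s i * matL cs (Ff k r c0 b1 b2 R3) $$ (\<alpha> i, \<gamma> j)) $$ (i,j)
        = diag3 a bb (int k + 1) (int k * (int k + 1) * int r) $$ (i,j)"
    proof (cases "i = j")
      case False
      then show ?thesis using ij' m Ffc eqiff Na by (simp add: diag3_def)
    next
      case True
      have vi: "s i * v (ls ! i) = (if i < a then 1 else if i < a + bb then int k + 1 else int k * (int k + 1) * int r)"
      proof -
        { assume "i < a" then have "s i * v (ls ! i) = 1"
            using P1[of i] b c0 unfolding s_def v_def U_def R3_def by auto }
        moreover
        { assume "a \<le> i" "i < a + bb" then have "s i * v (ls ! i) = int k + 1"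
            using P2[of i] b c0 unfolding s_def v_def U_def R3_def by auto }
        moreover
        { assume "a + bb \<le> i" then have "i = a + bb" using ij' Na by simp
          then have "s i * v (ls ! i) = int k * (int k + 1) * int r"
            using P3 b c0 unfolding s_def v_def U_def R3_def by (auto simp: algebra_simps) }
        ultimately show ?thesis by (meson not_le)
      qed
      show ?thesis using True ij' m Ffc Na vi by (simp add: diag3_def)
    qed
  qed (auto simp: diag3_def Na)
  then show ?thesis using e unfolding R3_def by simp
qed



lemma relpowp_lift:
  fixes R S :: "'b \<Rightarrow> 'b \<Rightarrow> bool"
  assumes "\<And>x y. R x y \<Longrightarrow> S x y" shows "(R ^^ m) a b \<Longrightarrow> (S ^^ m) a b"
proof (induction m arbitrary: b)
  case 0 then show ?case by (metis relpowp_0_E relpowp_0_I)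
next
  case (Suc m)
  obtain y where "(R ^^ m) a y" "R y b" using Suc.prems by (blast elim: relpowp_Suc_E)
  then show ?case using Suc.IH assms by (meson relpowp_Suc_I)
qed

lemma walk_bound:
  fixes f :: "'b \<Rightarrow> nat" and R :: "'b \<Rightarrow> 'b \<Rightarrow> bool"
  assumes "\<And>u w. R u w \<Longrightarrow> f w \<le> f u + 1" shows "(R ^^ m) a b \<Longrightarrow> f b \<le> f a + m"
proof (induction m arbitrary: b)
  case 0 then show ?case by (metis relpowp_0_E add_0_right order_refl)
next
  case (Suc m)
  obtain y where "(R ^^ m) a y" "R y b" using Suc.prems by (blast elim: relpowp_Suc_E)
  then show ?case using Suc.IH assms[of y b] by fastforce
qed

lemma kdist_le: "(kstep k V E ^^ m) a b \<Longrightarrow> kdist k V E a b \<le> m"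
  unfolding kdist_def by (rule Least_le)

lemma kdist_refl: "kdist k V E a a = 0"
  unfolding kdist_def by (rule Least_equality) auto

lemma kdist_eqI: "(kstep k V E ^^ m) a b \<Longrightarrow> (\<And>m'. (kstep k V E ^^ m') a b \<Longrightarrow> m \<le> m') \<Longrightarrow> kdist k V E a b = m"
  unfolding kdist_def by (rule Least_equality) auto

definition conn :: "nat \<Rightarrow> 'a set \<Rightarrow> 'a set set \<Rightarrow> bool" where
  "conn k V E \<longleftrightarrow> (\<forall>a\<in>cliques k V E. \<forall>b\<in>cliques k V E. (kstep k V E ^^ kdist k V E a b) a b)"

lemma kdist_tri:
  assumes "conn k V E" "a \<in> cliques k V E" "u \<in> cliques k V E" "kstep k V E u w"
  shows "kdist k V E a w \<le> kdist k V E a u + 1"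
proof -
  have "(kstep k V E ^^ kdist k V E a u) a u" using assms unfolding conn_def by blast
  then have "(kstep k V E ^^ Suc (kdist k V E a u)) a w" using assms(4) by (rule relpowp_Suc_I)
  then show ?thesis using kdist_le by fastforce
qed

lemma cliques_new:
  assumes fV: "finite V" and xV: "x \<notin> V" and EV: "\<forall>e\<in>E. e \<subseteq> V" and CV: "C \<subseteq> V" and Ccl: "is_clique E C"
  shows "cliques m (insert x V) (E \<union> {{x, c} | c. c \<in> C}) =
    cliques m V E \<union> {S. x \<in> S \<and> S \<subseteq> insert x C \<and> card S = m}"
proof (intro equalityI subsetI)
  fix S assume S: "S \<in> cliques m (insert x V) (E \<union> {{x, c} | c. c \<in> C})"
  show "S \<in> cliques m V E \<union> {S. x \<in> S \<and> S \<subseteq> insert x C \<and> card S = m}"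
  proof (cases "x \<in> S")
    case True
    have "S \<subseteq> insert x C"
    proof
      fix u assume u: "u \<in> S"
      show "u \<in> insert x C"
      proof (cases "u = x")
        case False
        then have "{u, x} \<in> E \<union> {{x, c} | c. c \<in> C}" using S u True unfolding cliques_def is_clique_def by blast
        moreover have "{u, x} \<notin> E" using EV xV by blast
        ultimately obtain c where "c \<in> C" "{u, x} = {x, c}" by blast
        then show ?thesis using False by (metis doubleton_eq_iff insertI2)
      qed simp
    qed
    then show ?thesis using True S unfolding cliques_def by blast
  next
    case False
    have "S \<subseteq> V" using S False unfolding cliques_def by blast
    moreover have "is_clique E S"
      unfolding is_clique_def
    proof (intro ballI impI)
      fix u v assume uv: "u \<in> S" "v \<in> S" "u \<noteq> v"
      then have "{u, v} \<in> E \<union> {{x, c} | c. c \<in> C}" using S unfolding cliques_def is_clique_def by blast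
      then show "{u, v} \<in> E" using False uv by (auto simp: doubleton_eq_iff)
    qed
    ultimately show ?thesis using S unfolding cliques_def by blast
  qed
next
  fix S assume S: "S \<in> cliques m V E \<union> {S. x \<in> S \<and> S \<subseteq> insert x C \<and> card S = m}"
  show "S \<in> cliques m (insert x V) (E \<union> {{x, c} | c. c \<in> C})"
  proof (cases "S \<in> cliques m V E")
    case True
    then show ?thesis unfolding cliques_def is_clique_def by blast
  next
    case False
    then have S': "x \<in> S" "S \<subseteq> insert x C" "card S = m" using S by auto
    have fC: "finite (insert x C)" using CV fV by (auto intro: finite_subset)
    have "S \<subseteq> insert x V" using S' CV by auto
    moreover have "finite S" using S'(2) fC by (rule finite_subset)
    moreover have "is_clique (E \<union> {{x, c} | c. c \<in> C}) S"
      unfolding is_clique_def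
    proof (intro ballI impI)
      fix u v assume uv: "u \<in> S" "v \<in> S" "u \<noteq> v"
      show "{u, v} \<in> E \<union> {{x, c} | c. c \<in> C}"
      proof (cases "u = x")
        case True
        then have "v \<in> C" using uv S' by auto
        then show ?thesis using True by blast
      next
        case False
        note F = False
        show ?thesis
        proof (cases "v = x")
          case True
          then have "u \<in> C" using uv S' F by auto
          then show ?thesis using True by (auto simp: insert_commute)
        next
          case False
          then have "u \<in> C" "v \<in> C" using uv S' F by auto
          then show ?thesis using Ccl uv unfolding is_clique_def by blast
        qed
      qed
    qed
    ultimately show ?thesis using S' unfolding cliques_def by blast
  qed
qed

lemma new_k:
  assumes fV: "finite V" and xV: "x \<notin> V" and CV: "C \<subseteq> V" and cC: "card C = k" and k: "k \<ge> 1"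
  shows "{S. x \<in> S \<and> S \<subseteq> insert x C \<and> card S = k} = (\<lambda>c. insert x (C - {c})) ` C"
    and "card {S. x \<in> S \<and> S \<subseteq> insert x C \<and> card S = k} = k"
proof -
  have fC: "finite C" using CV fV by (rule finite_subset)
  have xC: "x \<notin> C" using xV CV by auto
  show eq: "{S. x \<in> S \<and> S \<subseteq> insert x C \<and> card S = k} = (\<lambda>c. insert x (C - {c})) ` C"
  proof (intro equalityI subsetI)
    fix S assume S: "S \<in> {S. x \<in> S \<and> S \<subseteq> insert x C \<and> card S = k}"
    then have S': "x \<in> S" "S \<subseteq> insert x C" "card S = k" by auto
    have fS: "finite S" using S'(2) fC by (auto intro: finite_subset)
    have sub: "S - {x} \<subseteq> C" using S' by auto
    have cS: "card (S - {x}) = k - 1" using S' fS by simp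
    have "card (C - (S - {x})) = 1" using card_Diff_subset[OF _ sub] fS cC cS k by simp
    then obtain c where c: "C - (S - {x}) = {c}" by (rule card_1_singletonE)
    then have "c \<in> C" "S - {x} = C - {c}" using sub by auto
    then show "S \<in> (\<lambda>c. insert x (C - {c})) ` C" using S'(1) by (metis imageI insert_Diff)
  next
    fix S assume "S \<in> (\<lambda>c. insert x (C - {c})) ` C"
    then obtain c where c: "c \<in> C" "S = insert x (C - {c})" by auto
    have "card S = k" using c fC xC cC k by simp
    then show "S \<in> {S. x \<in> S \<and> S \<subseteq> insert x C \<and> card S = k}" using c by auto
  qed
  have "inj_on (\<lambda>c. insert x (C - {c})) C"
  proof (rule inj_onI)
    fix c c' assume cc: "c \<in> C" "c' \<in> C" "insert x (C - {c}) = insert x (C - {c'})"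
    then have "C - {c} = C - {c'}" using xC by (metis Diff_iff insert_ident)
    then show "c = c'" using cc by blast
  qed
  then show "card {S. x \<in> S \<and> S \<subseteq> insert x C \<and> card S = k} = k"
    unfolding eq using card_image cC by metis
qed

lemma new_k1:
  assumes fV: "finite V" and xV: "x \<notin> V" and CV: "C \<subseteq> V" and cC: "card C = k"
  shows "{S. x \<in> S \<and> S \<subseteq> insert x C \<and> card S = k + 1} = {insert x C}"
proof -
  have fC: "finite C" using CV fV by (rule finite_subset)
  have xC: "x \<notin> C" using xV CV by auto
  have ci: "card (insert x C) = k + 1" using fC xC cC by simp
  show ?thesis
  proof (intro equalityI subsetI)
    fix S assume "S \<in> {S. x \<in> S \<and> S \<subseteq> insert x C \<and> card S = k + 1}"
    then have "S \<subseteq> insert x C" "card S = card (insert x C)" using ci by auto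
    then have "S = insert x C" using fC by (metis card_subset_eq finite_insert)
    then show "S \<in> {insert x C}" by simp
  qed (use ci in auto)
qed



lemma graph_step:
  fixes V :: "'a set" and E :: "'a set set"
  assumes k: "k \<ge> 1" and fV: "finite V" and EV: "\<forall>e\<in>E. e \<subseteq> V" and xV: "x \<notin> V"
    and CV: "C \<subseteq> V" and cC: "card C = k" and Ccl: "is_clique E C" and cn: "conn k V E"
  defines "V' \<equiv> insert x V" and "E' \<equiv> E \<union> {{x, c} | c. c \<in> C}"
    and "Nn \<equiv> {S. x \<in> S \<and> S \<subseteq> insert x C \<and> card S = k}"
  shows "cliques k V' E' = cliques k V E \<union> Nn" "cliques k V E \<inter> Nn = {}" "card Nn = k"
    "C \<in> cliques k V E"
    "\<And>a b. a \<in> cliques k V E \<Longrightarrow> b \<in> cliques k V E \<Longrightarrow> kdist k V' E' a b = kdist k V E a b"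
    "\<And>a b. a \<in> Nn \<Longrightarrow> b \<in> cliques k V E \<Longrightarrow> kdist k V' E' a b = kdist k V E C b + 1"
    "\<And>a b. a \<in> cliques k V E \<Longrightarrow> b \<in> Nn \<Longrightarrow> kdist k V' E' a b = kdist k V E a C + 1"
    "\<And>a b. a \<in> Nn \<Longrightarrow> b \<in> Nn \<Longrightarrow> kdist k V' E' a b = (if a = b then 0 else 1)"
    "conn k V' E'"
proof -
  let ?A = "cliques k V E"
  have fC: "finite C" using CV fV by (rule finite_subset)
  have xC: "x \<notin> C" using xV CV by auto
  show cl: "cliques k V' E' = ?A \<union> Nn"
    unfolding V'_def E'_def Nn_def by (rule cliques_new[OF fV xV EV CV Ccl])
  have cl1: "cliques (k+1) V' E' = cliques (k+1) V E \<union> {insert x C}"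
    unfolding V'_def E'_def using cliques_new[OF fV xV EV CV Ccl, of "k+1"] new_k1[OF fV xV CV cC] by simp
  have AV: "S \<in> ?A \<Longrightarrow> S \<subseteq> V" for S unfolding cliques_def by auto
  have NnX: "S \<in> Nn \<Longrightarrow> x \<in> S" for S unfolding Nn_def by auto
  show disj: "?A \<inter> Nn = {}" using AV NnX xV by blast
  show "card Nn = k" unfolding Nn_def by (rule new_k(2)[OF fV xV CV cC k])
  show CA: "C \<in> ?A" unfolding cliques_def using CV fC cC Ccl by auto
  have ks1: "kstep k V E u w \<or> (u \<in> insert C Nn \<and> w \<in> insert C Nn)" if st0: "kstep k V' E' u w" for u w
  proof -
    obtain \<sigma> where s: "u \<in> cliques k V' E'" "w \<in> cliques k V' E'" "\<sigma> \<in> cliques (k+1) V' E'" "u \<subseteq> \<sigma>" "w \<subseteq> \<sigma>"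
      using st0 unfolding kstep_def by blast
    show ?thesis
    proof (cases "\<sigma> = insert x C")
      case False
      then have so: "\<sigma> \<in> cliques (k+1) V E" using s cl1 by auto
      then have "\<sigma> \<subseteq> V" unfolding cliques_def by auto
      then have "x \<notin> u" "x \<notin> w" using s xV by auto
      then have "u \<in> ?A" "w \<in> ?A" using s cl NnX by auto
      then show ?thesis using so s unfolding kstep_def by blast
    next
      case True
      have "v \<in> insert C Nn" if v: "v \<in> cliques k V' E'" "v \<subseteq> insert x C" for v
      proof (cases "x \<in> v")
        case True
        then show ?thesis using v unfolding cliques_def Nn_def by auto
      next
        case False
        then have "v \<subseteq> C" "card v = card C" using v cC unfolding cliques_def by auto
        then have "v = C" using fC card_subset_eq by blast
        then show ?thesis by simp
      qed
      then show ?thesis using s True by blast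
    qed
  qed
  have mono: "cliques m V E \<subseteq> cliques m V' E'" for m
    unfolding V'_def E'_def using cliques_new[OF fV xV EV CV Ccl, of m] by blast
  have ks2: "kstep k V' E' u w" if "kstep k V E u w" for u w
    using that mono[of k] mono[of "k+1"] unfolding kstep_def by blast
  have ks3: "kstep k V' E' u w" if "u \<in> insert C Nn" "w \<in> insert C Nn" for u w
  proof -
    have "insert x C \<in> cliques (k+1) V' E'" using cl1 by auto
    moreover have "u \<in> cliques k V' E'" "w \<in> cliques k V' E'" using that cl CA by auto
    moreover have "u \<subseteq> insert x C" "w \<subseteq> insert x C" using that unfolding Nn_def by auto
    ultimately show ?thesis unfolding kstep_def by blast
  qed
  define kd where "kd = kdist k V E"
  define F where "F a b = (if a \<in> Nn then (if b \<in> Nn then (if a = b then 0 else 1) else kd C b + 1)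
        else (if b \<in> Nn then kd a C + 1 else kd a b))" for a b
  have lift: "(kstep k V E ^^ m) a b \<Longrightarrow> (kstep k V' E' ^^ m) a b" for m a b
    by (rule relpowp_lift[OF ks2])
  have cw: "(kstep k V E ^^ kd a b) a b" if "a \<in> ?A" "b \<in> ?A" for a b
    using cn that unfolding conn_def kd_def by blast
  have walk: "(kstep k V' E' ^^ F a b) a b" if "a \<in> ?A \<union> Nn" "b \<in> ?A \<union> Nn" for a b
  proof (cases "a \<in> Nn")
    case aN: True
    show ?thesis
    proof (cases "b \<in> Nn")
      case True
      then show ?thesis using aN ks3 unfolding F_def by (auto intro: relpowp_0_I)
    next
      case False
      then have bA: "b \<in> ?A" using that by auto
      have "(kstep k V' E' ^^ kd C b) C b" using lift cw[OF CA bA] by blast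
      moreover have "kstep k V' E' a C" using ks3 aN by blast
      ultimately have "(kstep k V' E' ^^ Suc (kd C b)) a b" by (rule relpowp_Suc_I2[rotated])
      then show ?thesis using aN False unfolding F_def by simp
    qed
  next
    case aN: False
    then have aA: "a \<in> ?A" using that by auto
    show ?thesis
    proof (cases "b \<in> Nn")
      case True
      have "(kstep k V' E' ^^ kd a C) a C" using lift cw[OF aA CA] by blast
      moreover have "kstep k V' E' C b" using ks3 True by blast
      ultimately have "(kstep k V' E' ^^ Suc (kd a C)) a b" by (rule relpowp_Suc_I)
      then show ?thesis using aN True unfolding F_def by simp
    next
      case False
      then have bA: "b \<in> ?A" using that by auto
      show ?thesis using aN False lift cw[OF aA bA] unfolding F_def by simp
    qed
  qed
  have lip: "F a w \<le> F a u + 1" if a: "a \<in> ?A \<union> Nn" and st: "kstep k V' E' u w" for a u w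
  proof -
    have "kstep k V E u w \<or> (u \<in> insert C Nn \<and> w \<in> insert C Nn)" using ks1[OF st] .
    then show ?thesis
    proof
      assume ks: "kstep k V E u w"
      then have uw: "u \<in> ?A" "w \<in> ?A" unfolding kstep_def by auto
      then have uwN: "u \<notin> Nn" "w \<notin> Nn" using disj by auto
      show ?thesis
      proof (cases "a \<in> Nn")
        case True
        then show ?thesis using kdist_tri[OF cn CA uw(1) ks] uwN unfolding F_def kd_def by simp
      next
        case False
        then have "a \<in> ?A" using a by auto
        then show ?thesis using kdist_tri[OF cn _ uw(1) ks] uwN False unfolding F_def kd_def by simp
      qed
    next
      assume uw: "u \<in> insert C Nn \<and> w \<in> insert C Nn"
      have CN: "C \<notin> Nn" using CA disj by auto
      have kCC: "kd C C = 0" unfolding kd_def by (rule kdist_refl)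
      show ?thesis using uw CN kCC unfolding F_def by auto
    qed
  qed
  have F0: "F a a = 0" for a unfolding F_def kd_def by (simp add: kdist_refl)
  have kdF: "kdist k V' E' a b = F a b" if "a \<in> ?A \<union> Nn" "b \<in> ?A \<union> Nn" for a b
  proof (rule kdist_eqI[OF walk[OF that]])
    fix m assume m: "(kstep k V' E' ^^ m) a b"
    have L: "\<And>u w. kstep k V' E' u w \<Longrightarrow> F a w \<le> F a u + 1" using lip[OF that(1)] by blast
    have "F a b \<le> F a a + m" using walk_bound[of "kstep k V' E'" "F a", OF L m] .
    then show "F a b \<le> m" using F0 by simp
  qed
  show "\<And>a b. a \<in> ?A \<Longrightarrow> b \<in> ?A \<Longrightarrow> kdist k V' E' a b = kdist k V E a b"
    using kdF disj unfolding F_def kd_def by auto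
  show "\<And>a b. a \<in> Nn \<Longrightarrow> b \<in> ?A \<Longrightarrow> kdist k V' E' a b = kdist k V E C b + 1"
    using kdF disj unfolding F_def kd_def by auto
  show "\<And>a b. a \<in> ?A \<Longrightarrow> b \<in> Nn \<Longrightarrow> kdist k V' E' a b = kdist k V E a C + 1"
    using kdF disj unfolding F_def kd_def by auto
  show "\<And>a b. a \<in> Nn \<Longrightarrow> b \<in> Nn \<Longrightarrow> kdist k V' E' a b = (if a = b then 0 else 1)"
    using kdF disj unfolding F_def kd_def by auto
  show "conn k V' E'" unfolding conn_def cl using kdF walk by simp
qed



lemma cliques_base:
  assumes "finite V" "card V = k"
  shows "cliques k V (complete_edges V) = {V}"
proof (intro equalityI subsetI)
  fix S assume "S \<in> cliques k V (complete_edges V)"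
  then have "S \<subseteq> V" "card S = card V" using assms unfolding cliques_def by auto
  then show "S \<in> {V}" using assms card_subset_eq by blast
next
  fix S assume "S \<in> {V}"
  then show "S \<in> cliques k V (complete_edges V)"
    using assms unfolding cliques_def is_clique_def complete_edges_def by auto
qed

lemma ktree_inv:
  assumes "ktree k V E" "k \<ge> 1"
  shows "finite V \<and> card V \<ge> k \<and> (\<forall>e\<in>E. e \<subseteq> V) \<and> card (cliques k V E) = 1 + k * (card V - k) \<and> conn k V E"
  using assms
proof (induction rule: ktree.induct)
  case (base V)
  have cl: "cliques k V (complete_edges V) = {V}" by (rule cliques_base[OF base(1,2)])
  have "conn k V (complete_edges V)" unfolding conn_def cl by (simp add: kdist_refl relpowp_0_I)
  moreover have "\<forall>e\<in>complete_edges V. e \<subseteq> V" unfolding complete_edges_def by auto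
  ultimately show ?case using base cl by simp
next
  case (step V E x C)
  have IH: "finite V" "card V \<ge> k" "\<forall>e\<in>E. e \<subseteq> V" "card (cliques k V E) = 1 + k * (card V - k)" "conn k V E"
    using step.IH step.prems by auto
  note gs = graph_step[OF step.prems IH(1) IH(3) step.hyps(2) step.hyps(3) step.hyps(4) step.hyps(5) IH(5)]
  have fA: "finite (cliques k V E)" using IH(4) step.prems by (metis card.infinite add_is_0 one_neq_zero)
  have fN: "finite {S. x \<in> S \<and> S \<subseteq> insert x C \<and> card S = k}" using gs(3) step.prems
    by (metis card.infinite not_one_le_zero)
  have "card (cliques k (insert x V) (E \<union> {{x, c} |c. c \<in> C})) = 1 + k * (card V - k) + k"
    unfolding gs(1) using card_Un_disjoint[OF fA fN gs(2)] gs(3) IH(4) by simp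
  also have "\<dots> = 1 + k * (card (insert x V) - k)"
    using IH(1,2) step.hyps(2) by (simp add: Suc_diff_le algebra_simps)
  finally have c: "card (cliques k (insert x V) (E \<union> {{x, c} |c. c \<in> C})) = 1 + k * (card (insert x V) - k)" .
  have "\<forall>e\<in>E \<union> {{x, c} |c. c \<in> C}. e \<subseteq> insert x V" using IH(3) step.hyps(3) by auto
  then show ?case using IH(1,2) step.hyps(2) c gs(9) by simp
qed

lemma reduce:
  assumes kt: "ktree k V E" and k: "k \<ge> 1" and dist: "distinct cs" and L: "L = set cs"
  shows "cliques k V E \<subseteq> L \<Longrightarrow> B \<subseteq> L \<Longrightarrow> B \<inter> cliques k V E = {} \<Longrightarrow>
    (\<exists>c0 B'. c0 \<in> L \<and> B' \<subseteq> L \<and> c0 \<notin> B' \<and> card B' = card B + (card V - k) \<and>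
      equivm (matL cs (Mf k (cliques k V E) B (\<lambda>a b. int (kdist k V E a b)))) (matL cs (Mf k {c0} B' (\<lambda>a b. 0))))"
  using kt
proof (induction arbitrary: B rule: ktree.induct)
  case (base V)
  have cl: "cliques k V (complete_edges V) = {V}" by (rule cliques_base[OF base(1,2)])
  have "Mf k (cliques k V (complete_edges V)) B (\<lambda>a b. int (kdist k V (complete_edges V) a b))
      = Mf k {V} B (\<lambda>a b. 0)"
    unfolding cl by (intro ext) (simp add: Mf_def kdist_refl)
  then show ?case using base cl by (intro exI[of _ V] exI[of _ B]) (auto simp: equivm_refl)
next
  case (step V E x C)
  have inv: "finite V" "card V \<ge> k" "\<forall>e\<in>E. e \<subseteq> V" "conn k V E"
    using ktree_inv[OF step.hyps(1) k] by auto
  note gs = graph_step[OF k inv(1) inv(3) step.hyps(2) step.hyps(3) step.hyps(4) step.hyps(5) inv(4)]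
  define Nn where "Nn = {S. x \<in> S \<and> S \<subseteq> insert x C \<and> card S = k}"
  define A where "A = cliques k V E"
  define V' where "V' = insert x V"
  define E' where "E' = E \<union> {{x, c} |c. c \<in> C}"
  have cl: "cliques k V' E' = A \<union> Nn" using gs(1) unfolding Nn_def A_def V'_def E'_def .
  have cN: "card Nn = k" using gs(3) unfolding Nn_def .
  have "Nn \<noteq> {}" using cN k by (metis card.empty not_one_le_zero)
  then obtain t1 where t1: "t1 \<in> Nn" by blast
  have AL: "A \<subseteq> L" "Nn \<subseteq> L" using step.prems(1) cl unfolding V'_def E'_def by auto
  have disj: "A \<inter> Nn = {}" "A \<inter> B = {}" "Nn \<inter> B = {}"
    using gs(2) step.prems(3) cl unfolding Nn_def A_def V'_def E'_def by auto
  have CA: "C \<in> A" using gs(4) unfolding A_def .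
  have e1: "equivm (matL cs (Mf k (A \<union> Nn) B (\<lambda>a b. int (kdist k V' E' a b))))
       (matL cs (Mf k A (insert t1 B) (\<lambda>a b. int (kdist k V E a b))))"
  proof (rule step_red[OF dist L AL step.prems(2) disj CA t1])
    show "card Nn = k" using gs(3) unfolding Nn_def .
    show "int (kdist k V' E' a b) = int (kdist k V E a b)" if "a \<in> A" "b \<in> A" for a b
      using gs(5) that unfolding A_def V'_def E'_def by simp
    show "int (kdist k V' E' a b) = int (kdist k V E C b) + 1" if "a \<in> Nn" "b \<in> A" for a b
      using gs(6) that unfolding A_def V'_def E'_def Nn_def by simp
    show "int (kdist k V' E' a b) = int (kdist k V E a C) + 1" if "a \<in> A" "b \<in> Nn" for a b
      using gs(7) that unfolding A_def V'_def E'_def Nn_def by simp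
    show "int (kdist k V' E' a b) = (if a = b then 0 else 1)" if "a \<in> Nn" "b \<in> Nn" for a b
      using gs(8) that unfolding A_def V'_def E'_def Nn_def by simp
    show "int (kdist k V E C C) = 0" by (simp add: kdist_refl)
  qed
  have t1L: "t1 \<in> L" using t1 AL by auto
  have "\<exists>c0 B'. c0 \<in> L \<and> B' \<subseteq> L \<and> c0 \<notin> B' \<and> card B' = card (insert t1 B) + (card V - k) \<and>
      equivm (matL cs (Mf k (cliques k V E) (insert t1 B) (\<lambda>a b. int (kdist k V E a b)))) (matL cs (Mf k {c0} B' (\<lambda>a b. 0)))"
    by (rule step.IH) (use AL step.prems t1L disj t1 in \<open>auto simp: A_def\<close>)
  then obtain c0 B' where cb: "c0 \<in> L" "B' \<subseteq> L" "c0 \<notin> B'" "card B' = card (insert t1 B) + (card V - k)"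
    "equivm (matL cs (Mf k A (insert t1 B) (\<lambda>a b. int (kdist k V E a b)))) (matL cs (Mf k {c0} B' (\<lambda>a b. 0)))"
    unfolding A_def by blast
  have fB: "finite B" using step.prems(2) L by (auto intro: finite_subset)
  have t1B: "t1 \<notin> B" using t1 disj by auto
  have "card B' = card B + (card V' - k)"
    using cb(4) fB t1B inv(1,2) step.hyps(2) unfolding V'_def by simp
  moreover have "equivm (matL cs (Mf k (cliques k V' E') B (\<lambda>a b. int (kdist k V' E' a b)))) (matL cs (Mf k {c0} B' (\<lambda>a b. 0)))"
    using equivm_trans[OF e1 cb(5)] cl by simp
  ultimately show ?case using cb unfolding V'_def E'_def by blast
qed

lemma smith_diag3:
  assumes "c > 0" "d > 0" "c dvd d"
  shows "smith_form (diag3 a b c d)"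
  unfolding smith_form_def
proof (intro conjI exI[of _ "a + b + 1"])
  have dg: "i < a + b + 1 \<Longrightarrow> diag3 a b c d $$ (i, i) = (if i < a then 1 else if i < a + b then c else d)" for i
    unfolding diag3_def by simp
  show "\<forall>i<dim_row (diag3 a b c d). \<forall>j<dim_col (diag3 a b c d). i \<noteq> j \<longrightarrow> diag3 a b c d $$ (i, j) = 0"
    unfolding diag3_def by simp
  show "a + b + 1 \<le> min (dim_row (diag3 a b c d)) (dim_col (diag3 a b c d))" unfolding diag3_def by simp
  show "\<forall>i<a + b + 1. 0 < diag3 a b c d $$ (i, i)" using dg assms by simp
  show "\<forall>i. i + 1 < a + b + 1 \<longrightarrow> diag3 a b c d $$ (i, i) dvd diag3 a b c d $$ (i + 1, i + 1)"
    using dg assms by auto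
  show "\<forall>i. a + b + 1 \<le> i \<and> i < min (dim_row (diag3 a b c d)) (dim_col (diag3 a b c d)) \<longrightarrow> diag3 a b c d $$ (i, i) = 0"
    unfolding diag3_def by simp
qed



theorem mainTheorem1:
  fixes k n :: nat and V :: "'a set" and E :: "'a set set" and cs :: "'a set list"
  assumes "k \<ge> 1" and "n \<ge> k + 2"
    and "ktree k V E" and "card V = n"
    and "distinct cs" and "set cs = cliques k V E"
  shows "is_SNF_of (kdist_mat k V E cs)
           (diag3 ((k - 1) * (n - k) + 2) (n - k - 2) (int k + 1)
                  (int k * (int k + 1) * int (n - k)))"
proof -
  define L where "L = set cs"
  have k: "k \<ge> 1" using assms(1) .
  have inv: "finite V" "card V \<ge> k" "card (cliques k V E) = 1 + k * (card V - k)"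
    using ktree_inv[OF assms(3) k] by auto
  have cL: "card L = 1 + k * (n - k)" using inv assms(4,6) unfolding L_def by simp
  have fL: "finite L" unfolding L_def by simp
  have km: "kdist_mat k V E cs = matL cs (Mf k L {} (\<lambda>a b. int (kdist k V E a b)))"
    unfolding kdist_mat_def matL_def
    by (rule eq_matI) (auto simp: Mf_def L_def kdist_refl)
  obtain c0 B' where cb: "c0 \<in> L" "B' \<subseteq> L" "c0 \<notin> B'" "card B' = n - k"
    "equivm (matL cs (Mf k L {} (\<lambda>a b. int (kdist k V E a b)))) (matL cs (Mf k {c0} B' (\<lambda>a b. 0)))"
    using reduce[OF assms(3) k assms(5) L_def, of "{}"] assms(4,6) unfolding L_def by auto
  have fB: "finite B'" using cb(2) fL by (rule finite_subset)
  have "card B' \<ge> 2" using cb(4) assms(2) by simp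
  then obtain b1 where b1: "b1 \<in> B'" by (metis card.empty ex_in_conv not_numeral_le_zero)
  have "card (B' - {b1}) \<ge> 1" using \<open>card B' \<ge> 2\<close> b1 fB by simp
  then obtain b2 where b2: "b2 \<in> B' - {b1}" by (metis card.empty ex_in_conv not_one_le_zero)
  have e2: "equivm (matL cs (Mf k {c0} B' (\<lambda>a b. 0))) (matL cs (Ff k (n - k) c0 b1 b2 (B' - {b1, b2})))"
    by (rule final_red[OF assms(5) L_def cb(1,2,3)]) (use b1 b2 cb(4) in auto)
  have cU: "card (L - insert c0 B') = (k - 1) * (n - k)"
  proof -
    have "card (L - insert c0 B') = card L - card (insert c0 B')"
      using cb fB by (simp add: card_Diff_subset)
    also have "\<dots> = 1 + k * (n - k) - (1 + (n - k))" using cL cb(3,4) fB by simp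
    also have "\<dots> = (k - 1) * (n - k)" by (simp add: diff_mult_distrib)
    finally show ?thesis .
  qed
  have e3: "equivm (matL cs (Ff k (n - k) c0 b1 b2 (B' - {b1, b2})))
      (diag3 ((k - 1) * (n - k) + 2) (n - k - 2) (int k + 1) (int k * (int k + 1) * int (n - k)))"
    by (rule final_perm[OF assms(5) L_def cb(1,2,3)]) (use b1 b2 cb(4) cU in auto)
  have eq: "equivm (kdist_mat k V E cs)
      (diag3 ((k - 1) * (n - k) + 2) (n - k - 2) (int k + 1) (int k * (int k + 1) * int (n - k)))"
    unfolding km using equivm_trans[OF cb(5) equivm_trans[OF e2 e3]] .
  have sf: "smith_form (diag3 ((k - 1) * (n - k) + 2) (n - k - 2) (int k + 1) (int k * (int k + 1) * int (n - k)))"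
    by (rule smith_diag3) (use k assms(2) in auto)
  show ?thesis unfolding is_SNF_of_def
    using sf eq unimod_invertible unfolding equivm_def unimod_def by blast
qed


end
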